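(* Let $n\ge 3$ and let $C=(c_1,\dots,c_k)$, $k\ge 3$, be a circuit of the complete graph $K_n$. Define \[L_C=\sum_{1\le i<j\le k}(-1)^{i+j}\,(x_{t(c_i)}-x_{s(c_i)})\,\omega_{C\setminus\{c_i,c_j\}},\qquad L'_C=\sum_{1\le i<j\le k}(-1)^{i+j}\,(y_{t(c_i)}-y_{s(c_i)})\,\omega_{C\setminus\{c_i,c_j\}}\] in $E_2^{1,k-2}$. Then $d_2(L_C)=0$ and $d_2(L'_C)=0$, i.e. $L_C,L'_C\in\ker d_2^{1,k-2}$.
   Context: Let $E$ be a complex elliptic curve, $x,y$ a basis of $H^1(E;\mathbb{Q})$ with $xy$ generating $H^2(E;\mathbb{Q})$. Let $C(n)=\{(P_1,\dots,P_n)\in E^n\mid P_i\neq P_j \text{ for } i\neq j\}$ be the complement of the braid elliptic arrangement. Let $E_2=E_2^{\bullet,\bullet}$ be the second page (with differential $d_2$) of the Leray spectral sequence, with rational coefficients, of the inclusion $C(n)\hookrightarrow E^n$. It is the bigraded differential algebra given as the quotient of the free graded-commutative algebra (graded commutative with respect to total degree $p+q$) over $\mathbb{Q}$ on generators $x_i,y_i$ ($1\le i\le n$) of bidegree $(1,0)$ and $\omega_{ij}=\omega_{ji}$ ($1\le i\neq j\le n$) of bidegree $(0,1)$ by the relations $(x_i-x_j)\omega_{ij}=0$, $(y_i-y_j)\omega_{ij}=0$, and $\omega_{ij}\omega_{jk}+\omega_{jk}\omega_{ki}+\omega_{ki}\omega_{ij}=0$ for distinct $i,j,k$; here $x_i,y_i$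 are the pullbacks of $x,y$ along the $i$-th projection $E^n\to E$. The differential $d_2$ has bidegree $(2,-1)$, is a derivation for the total degree (graded Leibniz rule), vanishes on $x_i,y_i$, and $d_2\omega_{ij}=(x_i-x_j)(y_i-y_j)$. A circuit of length $k\ge3$ in $K_n$ is a sequence $C=(c_1,\dots,c_k)$ of oriented edges, with source $s(c)$ and target $t(c)$, such that $t(c_i)=s(c_{i+1})$ for $i<k$, $t(c_k)=s(c_1)$ and the $s(c_i)$ are pairwise distinct. For an oriented edge $c$ put $\omega_c=\omega_{s(c),t(c)}$, and for a subsequence $C\setminus\{c_i,c_j\}$ let $\omega_{C\setminus\{c_i,c_j\}}$ be the product of the $\omega_{c_m}$, $m\notin\{i,j\}$, in increasing order of $m$. *)

theory Defs
  imports Complex_Main "HOL-Library.Nat_Bijection"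
begin

text \<open>Generators of the free graded-commutative algebra: x_i, y_i and omega_ij (stored with i<j).
 All generators have odd total degree 1, so the free graded-commutative algebra over Q on them
 is the exterior algebra.  Elements are represented by their coefficient functions on
 basis monomials, a monomial being a set of generators (product taken in increasing order of gcode).\<close>

datatype gen = X nat | Y nat | W nat nat

fun gcode :: "gen \<Rightarrow> nat" where
  "gcode (X i) = 3 * i"
| "gcode (Y i) = 3 * i + 1"
| "gcode (W i j) = 3 * prod_encode (i, j) + 2"

type_synonym ext = "gen set \<Rightarrow> rat"

definition gens :: "nat \<Rightarrow> gen set" where
  "gens n = {X i | i. i \<in> {1..n}} \<union> {Y i | i. i \<in> {1..n}}
            \<union> {W i j | i j. 1 \<le> i \<and> i < j \<and> j \<le> n}"

definition ezero :: ext where "ezero = (\<lambda>S. 0)"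
definition eone :: ext where "eone = (\<lambda>S. if S = {} then 1 else 0)"
definition mon :: "gen set \<Rightarrow> ext" where "mon S = (\<lambda>T. if T = S then 1 else 0)"
definition eadd :: "ext \<Rightarrow> ext \<Rightarrow> ext" where "eadd f g = (\<lambda>S. f S + g S)"
definition esub :: "ext \<Rightarrow> ext \<Rightarrow> ext" where "esub f g = (\<lambda>S. f S - g S)"
definition esc :: "rat \<Rightarrow> ext \<Rightarrow> ext" where "esc r f = (\<lambda>S. r * f S)"
definition esum :: "('a \<Rightarrow> ext) \<Rightarrow> 'a set \<Rightarrow> ext" where
  "esum F A = (\<lambda>S. \<Sum>a\<in>A. F a S)"

text \<open>sign of e_S * e_T = sign * e_(S union T) for disjoint S, T\<close>
definition esign :: "gen set \<Rightarrow> gen set \<Rightarrow> rat" where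
  "esign S T = (-1) ^ card {(a, b). a \<in> S \<and> b \<in> T \<and> gcode b < gcode a}"

definition emult :: "ext \<Rightarrow> ext \<Rightarrow> ext" where
  "emult f g = (\<lambda>U. if finite U then (\<Sum>S\<in>Pow U. f S * g (U - S) * esign S (U - S)) else 0)"

definition eprod :: "ext list \<Rightarrow> ext" where
  "eprod fs = foldr emult fs eone"

definition xg :: "nat \<Rightarrow> ext" where "xg i = mon {X i}"
definition yg :: "nat \<Rightarrow> ext" where "yg i = mon {Y i}"
definition wg :: "nat \<Rightarrow> nat \<Rightarrow> ext" where "wg i j = mon {W (min i j) (max i j)}"

definition finsupp :: "nat \<Rightarrow> ext \<Rightarrow> bool" where
  "finsupp n f \<longleftrightarrow> finite {S. f S \<noteq> 0} \<and> (\<forall>S. f S \<noteq> 0 \<longrightarrow> S \<subseteq> gens n)"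

definition rels :: "nat \<Rightarrow> ext set" where
  "rels n =
     {emult (esub (xg i) (xg j)) (wg i j) | i j. i \<in> {1..n} \<and> j \<in> {1..n} \<and> i \<noteq> j}
   \<union> {emult (esub (yg i) (yg j)) (wg i j) | i j. i \<in> {1..n} \<and> j \<in> {1..n} \<and> i \<noteq> j}
   \<union> {eadd (eadd (emult (wg i j) (wg j k)) (emult (wg j k) (wg k i))) (emult (wg k i) (wg i j))
       | i j k. i \<in> {1..n} \<and> j \<in> {1..n} \<and> k \<in> {1..n} \<and> i \<noteq> j \<and> j \<noteq> k \<and> i \<noteq> k}"

text \<open>ideal generated by the relations in the free algebra on the generators with indices in 1..n
 (relations are homogeneous, so left ideal = two-sided ideal)\<close>
inductive_set rel_ideal :: "nat \<Rightarrow> ext set" for n where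
  zero: "ezero \<in> rel_ideal n"
| gen: "finsupp n a \<Longrightarrow> r \<in> rels n \<Longrightarrow> emult a r \<in> rel_ideal n"
| add: "p \<in> rel_ideal n \<Longrightarrow> q \<in> rel_ideal n \<Longrightarrow> eadd p q \<in> rel_ideal n"

fun dgen :: "gen \<Rightarrow> ext" where
  "dgen (X i) = ezero"
| "dgen (Y i) = ezero"
| "dgen (W i j) = emult (esub (xg i) (xg j)) (esub (yg i) (yg j))"

definition dmon :: "gen set \<Rightarrow> ext" where
  "dmon S = esum (\<lambda>g. esc ((-1) ^ card {h \<in> S. gcode h < gcode g})
                          (emult (dgen g) (mon (S - {g})))) S"

definition d2 :: "ext \<Rightarrow> ext" where
  "d2 f = esum (\<lambda>S. esc (f S) (dmon S)) {S. f S \<noteq> 0}"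

text \<open>circuits of K_n: list of oriented edges (source, target)\<close>
definition circuit :: "nat \<Rightarrow> (nat \<times> nat) list \<Rightarrow> bool" where
  "circuit n cs \<longleftrightarrow> length cs \<ge> 3
     \<and> (\<forall>c \<in> set cs. fst c \<in> {1..n} \<and> snd c \<in> {1..n} \<and> fst c \<noteq> snd c)
     \<and> (\<forall>i. i + 1 < length cs \<longrightarrow> snd (cs ! i) = fst (cs ! (i + 1)))
     \<and> snd (cs ! (length cs - 1)) = fst (cs ! 0)
     \<and> distinct (map fst cs)"

text \<open>omega_{C minus {c_i, c_j}} with 1-based indices i, j\<close>
definition omega_minus :: "(nat \<times> nat) list \<Rightarrow> nat \<Rightarrow> nat \<Rightarrow> ext" where
  "omega_minus cs i j =
     eprod (map (\<lambda>m. wg (fst (cs ! (m - 1))) (snd (cs ! (m - 1))))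
                (filter (\<lambda>m. m \<noteq> i \<and> m \<noteq> j) [1..<length cs + 1]))"

definition L_C :: "(nat \<Rightarrow> ext) \<Rightarrow> (nat \<times> nat) list \<Rightarrow> ext" where
  "L_C v cs = esum (\<lambda>(i, j). esc ((-1) ^ (i + j))
        (emult (esub (v (snd (cs ! (i - 1)))) (v (fst (cs ! (i - 1))))) (omega_minus cs i j)))
     {(i, j). 1 \<le> i \<and> i < j \<and> j \<le> length cs}"

end

theory Submission
  imports Defs
begin


definition invs :: "gen set \<Rightarrow> gen set \<Rightarrow> (gen \<times> gen) set" where
  "invs S T = {(a, b). a \<in> S \<and> b \<in> T \<and> gcode b < gcode a}"

lemma esign_invs: "esign S T = (-1) ^ card (invs S T)"
  by (simp add: esign_def invs_def)

lemma finite_invs: "finite S \<Longrightarrow> finite T \<Longrightarrow> finite (invs S T)"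
  unfolding invs_def by (rule finite_subset[of _ "S \<times> T"]) auto

lemma esign_Un_left:
  assumes "finite S" "finite T" "finite R" "S \<inter> T = {}"
  shows "esign (S \<union> T) R = esign S R * esign T R"
proof -
  have "invs (S \<union> T) R = invs S R \<union> invs T R" by (auto simp: invs_def)
  moreover have "invs S R \<inter> invs T R = {}" using assms(4) by (auto simp: invs_def)
  ultimately have "card (invs (S \<union> T) R) = card (invs S R) + card (invs T R)"
    using assms by (simp add: card_Un_disjoint finite_invs)
  thus ?thesis by (simp add: esign_invs power_add)
qed

lemma esign_Un_right:
  assumes "finite S" "finite T" "finite R" "T \<inter> R = {}"
  shows "esign S (T \<union> R) = esign S T * esign S R"
proof -
  have "invs S (T \<union> R) = invs S T \<union> invs S R" by (auto simp: invs_def)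
  moreover have "invs S T \<inter> invs S R = {}" using assms(4) by (auto simp: invs_def)
  ultimately have "card (invs S (T \<union> R)) = card (invs S T) + card (invs S R)"
    using assms by (simp add: card_Un_disjoint finite_invs)
  thus ?thesis by (simp add: esign_invs power_add)
qed

lemma esign_empty_left[simp]: "esign {} T = 1" by (simp add: esign_def)
lemma esign_empty_right[simp]: "esign S {} = 1" by (simp add: esign_def)

lemma emult_fin: "finite U \<Longrightarrow> emult f g U = (\<Sum>S\<in>Pow U. f S * g (U - S) * esign S (U - S))"
  by (simp add: emult_def)

lemma emult_assoc_pt:
  "emult (emult f g) h U = emult f (emult g h) U"
proof (cases "finite U")
  case False thus ?thesis by (simp add: emult_def)
next
  case fin: True
  have L: "emult (emult f g) h U =
     (\<Sum>A\<in>Pow U. \<Sum>S\<in>Pow A. f S * g (A - S) * esign S (A - S) * h (U - A) * esign A (U - A))"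
  proof -
    have "emult (emult f g) h U = (\<Sum>A\<in>Pow U. emult f g A * h (U - A) * esign A (U - A))"
      using fin by (rule emult_fin)
    also have "\<dots> = (\<Sum>A\<in>Pow U. \<Sum>S\<in>Pow A. f S * g (A - S) * esign S (A - S) * h (U - A) * esign A (U - A))"
    proof (rule sum.cong[OF refl])
      fix A assume "A \<in> Pow U"
      hence "finite A" using fin finite_subset by blast
      thus "emult f g A * h (U - A) * esign A (U - A) = (\<Sum>S\<in>Pow A. f S * g (A - S) * esign S (A - S) * h (U - A) * esign A (U - A))"
        by (simp add: emult_fin sum_distrib_right)
    qed
    finally show ?thesis .
  qed
  also have "\<dots> = (\<Sum>S\<in>Pow U. \<Sum>A\<in>{A\<in>Pow U. S \<subseteq> A}. f S * g (A - S) * esign S (A - S) * h (U - A) * esign A (U - A))"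
  proof -
    have "(\<Sum>A\<in>Pow U. \<Sum>S\<in>Pow A. f S * g (A - S) * esign S (A - S) * h (U - A) * esign A (U - A))
       = (\<Sum>A\<in>Pow U. \<Sum>S\<in>{S\<in>Pow U. S \<subseteq> A}. f S * g (A - S) * esign S (A - S) * h (U - A) * esign A (U - A))"
      by (rule sum.cong) (auto intro!: sum.cong)
    also have "\<dots> = (\<Sum>S\<in>Pow U. \<Sum>A\<in>{A\<in>Pow U. S \<subseteq> A}. f S * g (A - S) * esign S (A - S) * h (U - A) * esign A (U - A))"
      using sum.swap_restrict[of "Pow U" "Pow U" "\<lambda>A S. f S * g (A - S) * esign S (A - S) * h (U - A) * esign A (U - A)" "\<lambda>A S. S \<subseteq> A"] fin
      by simp
    finally show ?thesis .
  qed
  also have "\<dots> = (\<Sum>S\<in>Pow U. \<Sum>T\<in>Pow (U - S). f S * g T * esign S T * h (U - S - T) * esign (S \<union> T) (U - S - T))"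
  proof (rule sum.cong[OF refl])
    fix S assume S: "S \<in> Pow U"
    have bij: "bij_betw (\<lambda>T. S \<union> T) (Pow (U - S)) {A\<in>Pow U. S \<subseteq> A}"
      by (rule bij_betw_byWitness[where f'="\<lambda>A. A - S"]) (use S in auto)
    show "(\<Sum>A\<in>{A\<in>Pow U. S \<subseteq> A}. f S * g (A - S) * esign S (A - S) * h (U - A) * esign A (U - A))
       = (\<Sum>T\<in>Pow (U - S). f S * g T * esign S T * h (U - S - T) * esign (S \<union> T) (U - S - T))"
      unfolding sum.reindex_bij_betw[OF bij, symmetric]
    proof (rule sum.cong[OF refl])
      fix T assume T: "T \<in> Pow (U - S)"
      have "S \<union> T - S = T" "U - (S \<union> T) = U - S - T" using T by auto
      thus "f S * g (S \<union> T - S) * esign S (S \<union> T - S) * h (U - (S \<union> T)) * esign (S \<union> T) (U - (S \<union> T))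
           = f S * g T * esign S T * h (U - S - T) * esign (S \<union> T) (U - S - T)" by simp
    qed
  qed
  also have "\<dots> = (\<Sum>S\<in>Pow U. \<Sum>T\<in>Pow (U - S). f S * g T * h (U - S - T) * esign T (U - S - T) * esign S (U - S))"
  proof (intro sum.cong refl)
    fix S T assume S: "S \<in> Pow U" and T: "T \<in> Pow (U - S)"
    have fS: "finite S" and fT: "finite T" and fR: "finite (U - S - T)"
      using S T fin by (auto intro: finite_subset)
    have e1: "esign (S \<union> T) (U - S - T) = esign S (U - S - T) * esign T (U - S - T)"
      by (rule esign_Un_left) (use fS fT fR T in auto)
    have "U - S = T \<union> (U - S - T)" using T by auto
    hence e2: "esign S (U - S) = esign S T * esign S (U - S - T)"
      using esign_Un_right[OF fS fT fR] by auto
    show "f S * g T * esign S T * h (U - S - T) * esign (S \<union> T) (U - S - T) =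
          f S * g T * h (U - S - T) * esign T (U - S - T) * esign S (U - S)"
      by (simp add: e1 e2)
  qed
  also have "\<dots> = emult f (emult g h) U"
  proof -
    have "emult f (emult g h) U = (\<Sum>S\<in>Pow U. f S * emult g h (U - S) * esign S (U - S))"
      using fin by (rule emult_fin)
    also have "\<dots> = (\<Sum>S\<in>Pow U. \<Sum>T\<in>Pow (U - S). f S * g T * h (U - S - T) * esign T (U - S - T) * esign S (U - S))"
    proof (rule sum.cong[OF refl])
      fix S assume "S \<in> Pow U"
      have "finite (U - S)" using fin by simp
      thus "f S * emult g h (U - S) * esign S (U - S) = (\<Sum>T\<in>Pow (U - S). f S * g T * h (U - S - T) * esign T (U - S - T) * esign S (U - S))"
        by (simp add: emult_fin sum_distrib_right sum_distrib_left mult_ac)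
    qed
    finally show ?thesis by simp
  qed
  finally show ?thesis .
qed



definition fs :: "ext \<Rightarrow> bool" where
  "fs f \<longleftrightarrow> finite {S. f S \<noteq> 0} \<and> (\<forall>S. f S \<noteq> 0 \<longrightarrow> finite S)"

lemma emult_nz: "emult f g U \<noteq> 0 \<Longrightarrow> finite U \<and> (\<exists>S\<subseteq>U. f S \<noteq> 0 \<and> g (U - S) \<noteq> 0)"
  unfolding emult_def by (auto split: if_splits elim!: sum.not_neutral_contains_not_neutral)

lemma fs_emult: assumes "fs f" "fs g" shows "fs (emult f g)"
proof -
  have "{U. emult f g U \<noteq> 0} \<subseteq> (\<lambda>(S, T). S \<union> T) ` ({S. f S \<noteq> 0} \<times> {S. g S \<noteq> 0})"
  proof
    fix U assume "U \<in> {U. emult f g U \<noteq> 0}"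
    then obtain S where "S \<subseteq> U" "f S \<noteq> 0" "g (U - S) \<noteq> 0" using emult_nz by blast
    thus "U \<in> (\<lambda>(S, T). S \<union> T) ` ({S. f S \<noteq> 0} \<times> {S. g S \<noteq> 0})"
      by (auto intro!: image_eqI[where x="(S, U - S)"])
  qed
  moreover have "finite ((\<lambda>(S, T). S \<union> T) ` ({S. f S \<noteq> 0} \<times> {S. g S \<noteq> 0}))"
    using assms by (auto simp: fs_def)
  ultimately show ?thesis using emult_nz unfolding fs_def by (auto intro: finite_subset)
qed

typedef alg = "{f :: ext. fs f}" morphisms rep abs
  by (rule exI[of _ ezero]) (simp add: ezero_def fs_def)

setup_lifting type_definition_alg

lemma fs_ezero[simp]: "fs ezero" by (simp add: fs_def ezero_def)
lemma fs_eone[simp]: "fs eone" by (simp add: fs_def eone_def)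
lemma fs_mon[simp]: "finite S \<Longrightarrow> fs (mon S)" by (simp add: fs_def mon_def)
lemma fs_eadd: assumes "fs f" "fs g" shows "fs (eadd f g)"
proof -
  have "{S. eadd f g S \<noteq> 0} \<subseteq> {S. f S \<noteq> 0} \<union> {S. g S \<noteq> 0}" by (auto simp: eadd_def)
  moreover have "\<forall>S. eadd f g S \<noteq> 0 \<longrightarrow> f S \<noteq> 0 \<or> g S \<noteq> 0" by (auto simp: eadd_def)
  ultimately show ?thesis using assms unfolding fs_def by (meson finite_Un finite_subset)
qed
lemma fs_esub: assumes "fs f" "fs g" shows "fs (esub f g)"
proof -
  have "{S. esub f g S \<noteq> 0} \<subseteq> {S. f S \<noteq> 0} \<union> {S. g S \<noteq> 0}" by (auto simp: esub_def)
  moreover have "\<forall>S. esub f g S \<noteq> 0 \<longrightarrow> f S \<noteq> 0 \<or> g S \<noteq> 0" by (auto simp: esub_def)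
  ultimately show ?thesis using assms unfolding fs_def by (meson finite_Un finite_subset)
qed
lemma fs_uminus: "fs f \<Longrightarrow> fs (\<lambda>S. - f S)"
  unfolding fs_def by auto

lemma emult_eone_left: "fs f \<Longrightarrow> emult eone f = f"
proof (rule ext)
  fix U assume f: "fs f"
  show "emult eone f U = f U"
  proof (cases "finite U")
    case True
    have "(\<Sum>S\<in>Pow U. eone S * f (U - S) * esign S (U - S)) = (\<Sum>S\<in>{{}}. eone S * f (U - S) * esign S (U - S))"
      by (rule sum.mono_neutral_right) (auto simp: eone_def True)
    thus ?thesis using True by (simp add: emult_def eone_def)
  next
    case False thus ?thesis using f by (auto simp: emult_def fs_def)
  qed
qed

lemma emult_eone_right: "fs f \<Longrightarrow> emult f eone = f"
proof (rule ext)
  fix U assume f: "fs f"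
  show "emult f eone U = f U"
  proof (cases "finite U")
    case True
    have "(\<Sum>S\<in>Pow U. f S * eone (U - S) * esign S (U - S)) = (\<Sum>S\<in>{U}. f S * eone (U - S) * esign S (U - S))"
      by (rule sum.mono_neutral_right) (auto simp: eone_def True)
    thus ?thesis using True by (simp add: emult_def eone_def)
  next
    case False thus ?thesis using f by (auto simp: emult_def fs_def)
  qed
qed

lemma emult_eadd_left: "emult (eadd f g) h = eadd (emult f h) (emult g h)"
  by (auto simp: emult_def eadd_def algebra_simps sum.distrib)
lemma emult_eadd_right: "emult h (eadd f g) = eadd (emult h f) (emult h g)"
  by (auto simp: emult_def eadd_def algebra_simps sum.distrib)
lemma emult_ezero_left: "emult ezero h = ezero"
  by (auto simp: emult_def ezero_def)
lemma emult_ezero_right: "emult h ezero = ezero"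
  by (auto simp: emult_def ezero_def)

instantiation alg :: ring_1
begin
lift_definition zero_alg :: alg is ezero by simp
lift_definition one_alg :: alg is eone by simp
lift_definition plus_alg :: "alg \<Rightarrow> alg \<Rightarrow> alg" is eadd by (rule fs_eadd)
lift_definition minus_alg :: "alg \<Rightarrow> alg \<Rightarrow> alg" is esub by (rule fs_esub)
lift_definition uminus_alg :: "alg \<Rightarrow> alg" is "\<lambda>f S. - f S" by (rule fs_uminus)
lift_definition times_alg :: "alg \<Rightarrow> alg \<Rightarrow> alg" is emult by (rule fs_emult)
instance
proof
  fix a b c :: alg
  show "a * b * c = a * (b * c)" by transfer (simp add: emult_assoc_pt fun_eq_iff)
  show "a + b + c = a + (b + c)" by transfer (simp add: eadd_def fun_eq_iff)
  show "a + b = b + a" by transfer (simp add: eadd_def fun_eq_iff)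
  show "0 + a = a" by transfer (simp add: eadd_def ezero_def fun_eq_iff)
  show "- a + a = 0" by transfer (simp add: eadd_def ezero_def fun_eq_iff)
  show "a - b = a + - b" by transfer (simp add: eadd_def esub_def fun_eq_iff)
  show "(a + b) * c = a * c + b * c" by transfer (rule emult_eadd_left)
  show "a * (b + c) = a * b + a * c" by transfer (rule emult_eadd_right)
  show "1 * a = a" by transfer (rule emult_eone_left)
  show "a * 1 = a" by transfer (rule emult_eone_right)
  show "(0::alg) \<noteq> 1" by transfer (auto simp: ezero_def eone_def fun_eq_iff)
qed
end



lemmas rep_simps = zero_alg.rep_eq one_alg.rep_eq plus_alg.rep_eq minus_alg.rep_eq uminus_alg.rep_eq times_alg.rep_eq

lemma rep_fs: "fs (rep x)" using rep by simp

lemma rep_inj: "rep x = rep y \<Longrightarrow> x = y" by (simp add: rep_inject)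

lemma rep_abs: "fs f \<Longrightarrow> rep (abs f) = f" by (simp add: abs_inverse)

lemma rep_sum: "finite A \<Longrightarrow> rep (sum F A) = (\<lambda>U. \<Sum>a\<in>A. rep (F a) U)"
  by (induction A rule: finite_induct) (auto simp: rep_simps ezero_def eadd_def)

lemma rep_sum': "rep (sum F A) = esum (\<lambda>a. rep (F a)) A"
  by (cases "finite A") (auto simp: rep_sum esum_def rep_simps ezero_def)

lift_definition sc :: "rat \<Rightarrow> alg \<Rightarrow> alg" is esc
  by (auto simp: fs_def esc_def)

lemma sc_mult_left: "sc r (x * y) = sc r x * y"
  by transfer (auto simp: esc_def emult_def sum_distrib_left mult_ac fun_eq_iff)
lemma sc_mult_right: "sc r (x * y) = x * sc r y"
  by transfer (auto simp: esc_def emult_def sum_distrib_left mult_ac fun_eq_iff)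
lemma sc_add: "sc r (x + y) = sc r x + sc r y"
  by transfer (auto simp: esc_def eadd_def algebra_simps fun_eq_iff)
lemma sc_zero[simp]: "sc r 0 = 0"
  by transfer (auto simp: esc_def ezero_def fun_eq_iff)
lemma sc_one[simp]: "sc 1 x = x"
  by transfer (auto simp: esc_def fun_eq_iff)
lemma sc_neg1: "sc (-1) x = - x"
  by transfer (auto simp: esc_def fun_eq_iff)
lemma sc_sc: "sc r (sc s x) = sc (r * s) x"
  by transfer (auto simp: esc_def fun_eq_iff)
lemma sc_uminus: "sc (- r) x = - sc r x"
  by transfer (auto simp: esc_def fun_eq_iff)
lemma sc_neg_pow: "sc ((-1) ^ k) x = (-1) ^ k * x"
  by (induction k) (auto simp: sc_uminus sc_mult_left[symmetric])

definition M :: "gen set \<Rightarrow> alg" where "M S = abs (mon S)"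

lemma rep_M: "finite S \<Longrightarrow> rep (M S) = mon S"
  by (simp add: M_def rep_abs)

lemma mon_mult:
  assumes "finite S" "finite T"
  shows "emult (mon S) (mon T) = (if S \<inter> T = {} then esc (esign S T) (mon (S \<union> T)) else ezero)"
proof (rule ext)
  fix U
  show "emult (mon S) (mon T) U = (if S \<inter> T = {} then esc (esign S T) (mon (S \<union> T)) else ezero) U"
  proof (cases "finite U")
    case False
    hence "U \<noteq> S \<union> T" using assms by auto
    thus ?thesis using False by (simp add: emult_def esc_def mon_def ezero_def)
  next
    case True
    have "emult (mon S) (mon T) U = (\<Sum>S'\<in>Pow U. mon S S' * mon T (U - S') * esign S' (U - S'))"
      using True by (rule emult_fin)
    also have "\<dots> = (\<Sum>S'\<in>(if S \<subseteq> U \<and> U - S = T then {S} else {}). mon S S' * mon T (U - S') * esign S' (U - S'))"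
      by (rule sum.mono_neutral_right) (auto simp: True mon_def)
    also have "\<dots> = (if S \<subseteq> U \<and> U - S = T then esign S T else 0)"
      by (cases "S \<subseteq> U \<and> U - S = T") (auto simp: mon_def)
    also have "\<dots> = (if S \<inter> T = {} then esc (esign S T) (mon (S \<union> T)) else ezero) U"
      by (auto simp: esc_def mon_def ezero_def)
    finally show ?thesis .
  qed
qed

lemma M_mult:
  assumes "finite S" "finite T"
  shows "M S * M T = (if S \<inter> T = {} then (-1) ^ card (invs S T) * M (S \<union> T) else 0)"
proof (rule rep_inj)
  have "rep (M S * M T) = (if S \<inter> T = {} then esc (esign S T) (mon (S \<union> T)) else ezero)"
    using assms by (simp add: rep_simps rep_M mon_mult)
  also have "\<dots> = rep (if S \<inter> T = {} then (-1) ^ card (invs S T) * M (S \<union> T) else 0)"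
    using assms by (auto simp: esign_invs simp flip: sc_neg_pow simp: sc.rep_eq rep_M rep_simps)
  finally show "rep (M S * M T) = rep (if S \<inter> T = {} then (-1) ^ card (invs S T) * M (S \<union> T) else 0)" .
qed

lemma M_empty: "M {} = 1"
  by (rule rep_inj) (simp add: rep_M rep_simps mon_def eone_def fun_eq_iff)

lemma gcode_mod3: "gcode g mod 3 = (case g of X _ \<Rightarrow> 0 | Y _ \<Rightarrow> 1 | W _ _ \<Rightarrow> 2)"
proof (cases g)
  case (W i j)
  have "(3 * prod_encode (i, j) + 2) mod 3 = (2::nat)" by presburger
  thus ?thesis using W by simp
next
  case (X i) thus ?thesis by simp
next
  case (Y i) thus ?thesis by simp
qed

lemma gcode_inj: assumes e: "gcode g = gcode h" shows "g = h"
proof -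
  have "gcode g mod 3 = gcode h mod 3" using e by simp
  hence c: "(case g of X _ \<Rightarrow> 0 | Y _ \<Rightarrow> 1 | W _ _ \<Rightarrow> 2) = (case h of X _ \<Rightarrow> 0 | Y _ \<Rightarrow> 1 | W _ _ \<Rightarrow> (2::nat))"
    by (simp only: gcode_mod3)
  show ?thesis
  proof (cases g)
    case (X i) thus ?thesis using c e by (cases h) simp_all
  next
    case (Y i) thus ?thesis using c e by (cases h) simp_all
  next
    case (W i j) thus ?thesis using c e by (cases h) simp_all
  qed
qed

definition G :: "gen \<Rightarrow> alg" where "G g = M {g}"

lemma G_anti: "G g * G h = - (G h * G g)"
proof (cases "g = h")
  case True thus ?thesis by (simp add: G_def M_mult)
next
  case False
  hence ne: "gcode g \<noteq> gcode h" using gcode_inj by blast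
  have A: "G g * G h = (-1) ^ card (invs {g} {h}) * M ({g} \<union> {h})"
    using False unfolding G_def by (subst M_mult) auto
  have "{h} \<union> {g} = {g} \<union> {h}" by blast
  hence B: "G h * G g = (-1) ^ card (invs {h} {g}) * M ({g} \<union> {h})"
    using False unfolding G_def by (subst M_mult) auto
  have i1: "invs {g} {h} = (if gcode h < gcode g then {(g, h)} else {})"
   and i2: "invs {h} {g} = (if gcode g < gcode h then {(h, g)} else {})"
    by (auto simp: invs_def)
  show ?thesis
  proof (cases "gcode h < gcode g")
    case True
    hence "\<not> gcode g < gcode h" by simp
    thus ?thesis unfolding A B i1 i2 using True by simp
  next
    case False
    hence "gcode g < gcode h" using ne by simp
    thus ?thesis unfolding A B i1 i2 using False by simp
  qed
qed

lemma G_sq: "G g * G g = 0" by (simp add: G_def M_mult)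

inductive_set lin1 :: "alg set" where
  lin1_G: "G g \<in> lin1"
| lin1_zero: "0 \<in> lin1"
| lin1_add: "x \<in> lin1 \<Longrightarrow> y \<in> lin1 \<Longrightarrow> x + y \<in> lin1"
| lin1_neg: "x \<in> lin1 \<Longrightarrow> - x \<in> lin1"

lemma lin1_diff: "x \<in> lin1 \<Longrightarrow> y \<in> lin1 \<Longrightarrow> x - y \<in> lin1"
  unfolding diff_conv_add_uminus by (rule lin1_add, assumption, rule lin1_neg)

lemma lin1_anti_G: "x \<in> lin1 \<Longrightarrow> x * G h = - (G h * x)"
proof (induction rule: lin1.induct)
  case (lin1_G g) thus ?case by (rule G_anti)
next
  case lin1_zero thus ?case by simp
next
  case (lin1_add x y)
  have "(x + y) * G h = x * G h + y * G h" by (rule distrib_right)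
  also have "\<dots> = - (G h * x) - G h * y" using lin1_add by simp
  also have "\<dots> = - (G h * (x + y))" by (simp add: distrib_left)
  finally show ?case .
next
  case (lin1_neg x)
  thus ?case by simp
qed

lemma lin1_anti: "y \<in> lin1 \<Longrightarrow> x \<in> lin1 \<Longrightarrow> x * y = - (y * x)"
proof (induction y rule: lin1.induct)
  case (lin1_G g) thus ?case by (simp add: lin1_anti_G)
next
  case lin1_zero thus ?case by simp
next
  case (lin1_add y z)
  have "x * (y + z) = x * y + x * z" by (rule distrib_left)
  also have "\<dots> = - (y * x) - z * x" using lin1_add by simp
  also have "\<dots> = - ((y + z) * x)" by (simp add: distrib_right)
  finally show ?case .
next
  case (lin1_neg y)
  thus ?case by simp
qed

lemma lin1_sq: "x \<in> lin1 \<Longrightarrow> x * x = 0"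
proof (induction rule: lin1.induct)
  case (lin1_G g) thus ?case by (simp add: G_sq)
next
  case lin1_zero thus ?case by simp
next
  case (lin1_add x y)
  have "(x + y) * (x + y) = x * x + y * y + (x * y + y * x)" by (simp add: distrib_left distrib_right)
  also have "x * y + y * x = 0" using lin1_anti[OF lin1_add(2,1)] by simp
  finally show ?case using lin1_add by simp
next
  case (lin1_neg x) thus ?case by simp
qed

lemma even_comm: "x \<in> lin1 \<Longrightarrow> y \<in> lin1 \<Longrightarrow> z \<in> lin1 \<Longrightarrow> (x * y) * z = z * (x * y)"
proof -
  assume a: "x \<in> lin1" "y \<in> lin1" "z \<in> lin1"
  have "(x * y) * z = x * (y * z)" by (simp add: mult.assoc)
  also have "\<dots> = - (x * (z * y))" using lin1_anti[OF a(3,2)] by simp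
  also have "\<dots> = - ((x * z) * y)" by (simp add: mult.assoc)
  also have "\<dots> = (z * x) * y" using lin1_anti[OF a(3,1)] by simp
  finally show ?thesis by (simp add: mult.assoc)
qed

lemma even_comm_prod: "x \<in> lin1 \<Longrightarrow> y \<in> lin1 \<Longrightarrow> set zs \<subseteq> lin1 \<Longrightarrow> (x * y) * prod_list zs = prod_list zs * (x * y)"
proof (induction zs)
  case (Cons z zs)
  have ih: "(x * y) * prod_list zs = prod_list zs * (x * y)" using Cons by simp
  have ec: "(x * y) * z = z * (x * y)" using Cons by (simp add: even_comm)
  have "x * y * prod_list (z # zs) = ((x * y) * z) * prod_list zs" by (simp only: prod_list.Cons mult.assoc)
  also have "\<dots> = z * ((x * y) * prod_list zs)" by (metis ec mult.assoc)
  also have "\<dots> = prod_list (z # zs) * (x * y)" by (metis ih prod_list.Cons mult.assoc)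
  finally show ?case .
qed simp



lemma fs_esc: "fs f \<Longrightarrow> fs (esc r f)"
  unfolding fs_def esc_def by (auto intro: finite_subset[of _ "{S. f S \<noteq> 0}"])

lemma fs_esum: "finite A \<Longrightarrow> (\<And>a. a \<in> A \<Longrightarrow> fs (F a)) \<Longrightarrow> fs (esum F A)"
proof (induction A rule: finite_induct)
  case empty thus ?case by (simp add: esum_def fs_def)
next
  case (insert a A)
  have "esum F (insert a A) = eadd (F a) (esum F A)"
    using insert by (auto simp: esum_def eadd_def fun_eq_iff)
  thus ?case using insert fs_eadd by auto
qed

lemma fs_dgen: "fs (dgen g)"
  by (cases g) (auto intro!: fs_emult fs_esub simp: xg_def yg_def)

definition DG :: "gen \<Rightarrow> alg" where "DG g = abs (dgen g)"

lemma rep_DG: "rep (DG g) = dgen g" by (simp add: DG_def rep_abs fs_dgen)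

lemma fs_dmon: "finite S \<Longrightarrow> fs (dmon S)"
  unfolding dmon_def by (auto intro!: fs_esum fs_esc fs_emult fs_dgen)

lemma fs_d2: "fs f \<Longrightarrow> fs (d2 f)"
proof -
  assume f: "fs f"
  hence "finite {S. f S \<noteq> 0}" "\<And>S. f S \<noteq> 0 \<Longrightarrow> finite S" by (auto simp: fs_def)
  thus ?thesis unfolding d2_def by (intro fs_esum fs_esc fs_dmon) auto
qed

definition D :: "alg \<Rightarrow> alg" where "D x = abs (d2 (rep x))"

lemma rep_D: "rep (D x) = d2 (rep x)" by (simp add: D_def rep_abs fs_d2 rep_fs)

lemma d2_superset:
  assumes "finite A" "{S. f S \<noteq> 0} \<subseteq> A"
  shows "d2 f = esum (\<lambda>S. esc (f S) (dmon S)) A"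
proof (rule ext)
  fix U
  show "d2 f U = esum (\<lambda>S. esc (f S) (dmon S)) A U"
    unfolding d2_def esum_def
    by (rule sum.mono_neutral_left) (use assms in \<open>auto simp: esc_def\<close>)
qed

lemma supp_fin: "finite {S. rep x S \<noteq> 0}" using rep_fs[of x] by (simp add: fs_def)

lemma D_add: "D (x + y) = D x + D y"
proof (rule rep_inj)
  let ?A = "{S. rep x S \<noteq> 0} \<union> {S. rep y S \<noteq> 0}"
  have fA: "finite ?A" using supp_fin by simp
  have "rep (D (x + y)) = esum (\<lambda>S. esc (rep (x + y) S) (dmon S)) ?A"
    unfolding rep_D by (rule d2_superset[OF fA]) (auto simp: rep_simps eadd_def)
  also have "\<dots> = eadd (esum (\<lambda>S. esc (rep x S) (dmon S)) ?A) (esum (\<lambda>S. esc (rep y S) (dmon S)) ?A)"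
    by (auto simp: esum_def eadd_def esc_def rep_simps algebra_simps sum.distrib fun_eq_iff)
  also have "\<dots> = rep (D x + D y)"
    unfolding rep_simps rep_D
    by (subst (1 2) d2_superset[OF fA]) auto
  finally show "rep (D (x + y)) = rep (D x + D y)" .
qed

lemma D_sc: "D (sc r x) = sc r (D x)"
proof (rule rep_inj)
  let ?A = "{S. rep x S \<noteq> 0}"
  have fA: "finite ?A" using supp_fin by simp
  have "rep (D (sc r x)) = esum (\<lambda>S. esc (rep (sc r x) S) (dmon S)) ?A"
    unfolding rep_D by (rule d2_superset[OF fA]) (auto simp: sc.rep_eq esc_def)
  also have "\<dots> = esc r (esum (\<lambda>S. esc (rep x S) (dmon S)) ?A)"
    by (auto simp: esum_def esc_def sc.rep_eq sum_distrib_left mult_ac fun_eq_iff)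
  also have "\<dots> = rep (sc r (D x))"
    unfolding sc.rep_eq rep_D
    by (subst d2_superset[OF fA]) auto
  finally show "rep (D (sc r x)) = rep (sc r (D x))" .
qed

lemma D_zero: "D 0 = 0"
  using D_sc[of 0 0] by (metis sc_zero sc.rep_eq esc_def mult_zero_left rep_inj fun_eq_iff zero_alg.rep_eq ezero_def)

lemma D_neg: "D (- x) = - D x"
  using D_sc[of "-1" x] by (simp add: sc_neg1)

lemma D_diff: "D (x - y) = D x - D y"
  using D_add[of x "- y"] by (simp add: D_neg)

lemma D_sum: "D (sum F A) = (\<Sum>a\<in>A. D (F a))"
  by (induction A rule: infinite_finite_induct) (auto simp: D_zero D_add)

lemma neg1_pow_comm: "(-1) ^ k * (z::alg) = z * (-1) ^ k"
  by (induction k) (auto simp: algebra_simps)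

lemma rep_neg1_pow: "rep ((-1) ^ k * x) = esc ((-1) ^ k) (rep x)"
  by (simp flip: sc_neg_pow add: sc.rep_eq)

definition cnt :: "gen set \<Rightarrow> gen \<Rightarrow> nat" where
  "cnt S g = card {h \<in> S. gcode h < gcode g}"

lemma dmon_alg: "finite S \<Longrightarrow> dmon S = rep (\<Sum>g\<in>S. (-1) ^ cnt S g * (DG g * M (S - {g})))"
  by (simp add: dmon_def rep_sum' rep_neg1_pow cnt_def) (simp add: rep_simps rep_DG rep_M)

lemma D_M: "finite S \<Longrightarrow> D (M S) = (\<Sum>g\<in>S. (-1) ^ cnt S g * (DG g * M (S - {g})))"
proof (rule rep_inj)
  assume S: "finite S"
  have "rep (D (M S)) = d2 (mon S)" by (simp add: rep_D rep_M S)
  also have "\<dots> = esum (\<lambda>T. esc (mon S T) (dmon T)) {S}"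
    by (rule d2_superset) (auto simp: mon_def)
  also have "\<dots> = dmon S" by (auto simp: esum_def esc_def mon_def fun_eq_iff)
  finally show "rep (D (M S)) = rep (\<Sum>g\<in>S. (-1) ^ cnt S g * (DG g * M (S - {g})))"
    using S by (simp add: dmon_alg)
qed

lemma decomp: "x = (\<Sum>S\<in>{S. rep x S \<noteq> 0}. sc (rep x S) (M S))"
proof (rule rep_inj, rule ext)
  fix U
  have fin: "\<And>S. rep x S \<noteq> 0 \<Longrightarrow> finite S" using rep_fs[of x] by (auto simp: fs_def)
  have "rep (\<Sum>S\<in>{S. rep x S \<noteq> 0}. sc (rep x S) (M S)) U = (\<Sum>S\<in>{S. rep x S \<noteq> 0}. rep x S * mon S U)"
    using supp_fin by (auto simp: rep_sum sc.rep_eq esc_def rep_M fin intro!: sum.cong)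
  also have "\<dots> = (\<Sum>S\<in>{S. rep x S \<noteq> 0} \<inter> {U}. rep x S * mon S U)"
    by (rule sum.mono_neutral_right) (auto simp: supp_fin mon_def)
  also have "\<dots> = rep x U" by (cases "rep x U = 0") (auto simp: mon_def)
  finally show "rep x U = rep (\<Sum>S\<in>{S. rep x S \<noteq> 0}. sc (rep x S) (M S)) U" by simp
qed

lemma DG_W: "DG (W i j) = (G (X i) - G (X j)) * (G (Y i) - G (Y j))"
  by (rule rep_inj) (simp add: rep_DG rep_simps G_def rep_M xg_def yg_def)

lemma DG_X: "DG (X i) = 0" by (rule rep_inj) (simp add: rep_DG rep_simps)
lemma DG_Y: "DG (Y i) = 0" by (rule rep_inj) (simp add: rep_DG rep_simps)

lemma DG_comm: "DG g * G h = G h * DG g"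
proof (cases g)
  case (W i j)
  have "(G (X i) - G (X j)) * (G (Y i) - G (Y j)) * prod_list [G h] = prod_list [G h] * ((G (X i) - G (X j)) * (G (Y i) - G (Y j)))"
    by (rule even_comm_prod) (auto intro: lin1_diff lin1_G)
  thus ?thesis using W by (simp add: DG_W)
qed (auto simp: DG_X DG_Y)



lemma D_neg1_pow: "D ((-1) ^ k * x) = (-1) ^ k * D x"
  by (metis D_sc sc_neg_pow)

lemma pull_sign: "DG h * ((-1) ^ b * y) = (-1) ^ b * (DG h * y)"
  by (metis mult.assoc neg1_pow_comm)

lemma sc_diff: "sc r (x - y) = sc r x - sc r y"
  by transfer (auto simp: esc_def esub_def algebra_simps fun_eq_iff)

lemma card_invs_single: "finite S \<Longrightarrow> card (invs {g} S) = cnt S g"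
proof -
  assume fS: "finite S"
  have "invs {g} S = Pair g ` {h \<in> S. gcode h < gcode g}" by (auto simp: invs_def)
  moreover have "inj_on (Pair g) {h \<in> S. gcode h < gcode g}" by (auto simp: inj_on_def)
  ultimately show ?thesis by (simp add: card_image cnt_def)
qed

lemma G_M: "finite S \<Longrightarrow> G g * M S = (if g \<in> S then 0 else (-1) ^ cnt S g * M (insert g S))"
  unfolding G_def by (subst M_mult) (auto simp: card_invs_single)

lemma cnt_insert: "finite S \<Longrightarrow> g \<notin> S \<Longrightarrow> cnt (insert g S) h = cnt S h + (if gcode g < gcode h then 1 else 0)"
proof -
  assume fS: "finite S" and g: "g \<notin> S"
  have "{h' \<in> insert g S. gcode h' < gcode h} = (if gcode g < gcode h then insert g {h' \<in> S. gcode h' < gcode h} else {h' \<in> S. gcode h' < gcode h})"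
    by auto
  thus ?thesis using fS g by (simp add: cnt_def)
qed

lemma cnt_self: "cnt (insert g S) g = cnt S g"
  unfolding cnt_def by (rule arg_cong[where f=card]) auto

lemma cnt_remove: "finite S \<Longrightarrow> h \<in> S \<Longrightarrow> cnt S g = cnt (S - {h}) g + (if gcode h < gcode g then 1 else 0)"
  using cnt_insert[of "S - {h}" h g] by (simp add: insert_absorb)

lemma G_DG_sign: "G g * ((-1) ^ k * (DG h * Z)) = (-1) ^ k * (DG h * (G g * Z))"
  by (metis mult.assoc neg1_pow_comm DG_comm)

lemma G_D_M: "finite S \<Longrightarrow> G g * D (M S) = (\<Sum>h\<in>S. (-1) ^ cnt S h * (DG h * (G g * M (S - {h}))))"
  by (simp add: D_M sum_distrib_left G_DG_sign)

lemma D_G_M_notin: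
  assumes fS: "finite S" and g: "g \<notin> S"
  shows "D (G g * M S) = DG g * M S - G g * D (M S)"
proof -
  let ?c = "cnt S g"
  have ins: "insert g S - {g} = S" using g by auto
  have A: "D (M (insert g S)) = (-1) ^ ?c * (DG g * M S) +
      (\<Sum>h\<in>S. (-1) ^ (cnt S h + (if gcode g < gcode h then 1 else 0)) * (DG h * M (insert g (S - {h}))))"
  proof -
    have "D (M (insert g S)) = (\<Sum>h\<in>insert g S. (-1) ^ cnt (insert g S) h * (DG h * M (insert g S - {h})))"
      using fS by (simp add: D_M)
    also have "\<dots> = (-1) ^ cnt (insert g S) g * (DG g * M (insert g S - {g})) +
        (\<Sum>h\<in>S. (-1) ^ cnt (insert g S) h * (DG h * M (insert g S - {h})))"
      using fS g by (simp add: sum.insert)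
    also have "(\<Sum>h\<in>S. (-1) ^ cnt (insert g S) h * (DG h * M (insert g S - {h}))) =
        (\<Sum>h\<in>S. (-1) ^ (cnt S h + (if gcode g < gcode h then 1 else 0)) * (DG h * M (insert g (S - {h}))))"
    proof (rule sum.cong[OF refl])
      fix h assume h: "h \<in> S"
      have "insert g S - {h} = insert g (S - {h})" using h g by auto
      thus "(-1) ^ cnt (insert g S) h * (DG h * M (insert g S - {h})) =
        (-1) ^ (cnt S h + (if gcode g < gcode h then 1 else 0)) * (DG h * M (insert g (S - {h})))"
        using fS g by (simp add: cnt_insert)
    qed
    finally show ?thesis by (simp only: cnt_self ins)
  qed
  have "D (G g * M S) = (-1) ^ ?c * D (M (insert g S))"
    using fS g by (simp add: G_M D_neg1_pow)
  also have "\<dots> = ((-1) ^ ?c * (-1) ^ ?c) * (DG g * M S) +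
      (\<Sum>h\<in>S. (-1) ^ (?c + (cnt S h + (if gcode g < gcode h then 1 else 0))) * (DG h * M (insert g (S - {h}))))"
    unfolding A by (simp add: distrib_left sum_distrib_left mult.assoc power_add)
  also have "(-1) ^ ?c * (-1) ^ ?c = (1::alg)" by (simp flip: power_add)
  also have "(\<Sum>h\<in>S. (-1) ^ (?c + (cnt S h + (if gcode g < gcode h then 1 else 0))) * (DG h * M (insert g (S - {h})))) =
       - (\<Sum>h\<in>S. (-1) ^ cnt S h * (DG h * (G g * M (S - {h}))))"
  proof -
    have "(\<Sum>h\<in>S. (-1) ^ (?c + (cnt S h + (if gcode g < gcode h then 1 else 0))) * (DG h * M (insert g (S - {h})))) =
       (\<Sum>h\<in>S. - ((-1) ^ cnt S h * (DG h * (G g * M (S - {h})))))"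
    proof (rule sum.cong[OF refl])
      fix h assume h: "h \<in> S"
      have gh: "g \<noteq> h" using g h by auto
      hence "gcode g \<noteq> gcode h" using gcode_inj by blast
      hence e: "?c + (cnt S h + (if gcode g < gcode h then 1 else 0)) = Suc (cnt S h + cnt (S - {h}) g)"
        using cnt_remove[OF fS h, of g] by auto
      have "G g * M (S - {h}) = (-1) ^ cnt (S - {h}) g * M (insert g (S - {h}))"
        using fS g by (simp add: G_M)
      thus "(-1) ^ (?c + (cnt S h + (if gcode g < gcode h then 1 else 0))) * (DG h * M (insert g (S - {h}))) =
          - ((-1) ^ cnt S h * (DG h * (G g * M (S - {h}))))"
        unfolding e by (simp add: pull_sign power_add mult.assoc)
    qed
    thus ?thesis by (simp add: sum_negf)
  qed
  finally show ?thesis using fS by (simp add: G_D_M)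
qed

lemma D_G_M_in:
  assumes fS: "finite S" and g: "g \<in> S"
  shows "D (G g * M S) = DG g * M S - G g * D (M S)"
proof -
  have "G g * D (M S) = (\<Sum>h\<in>S. (-1) ^ cnt S h * (DG h * (G g * M (S - {h}))))"
    using fS by (rule G_D_M)
  also have "\<dots> = (-1) ^ cnt S g * (DG g * (G g * M (S - {g}))) +
       (\<Sum>h\<in>S - {g}. (-1) ^ cnt S h * (DG h * (G g * M (S - {h}))))"
    using fS g by (simp add: sum.remove)
  also have "(\<Sum>h\<in>S - {g}. (-1) ^ cnt S h * (DG h * (G g * M (S - {h})))) = 0"
    by (rule sum.neutral) (use fS g in \<open>auto simp: G_M\<close>)
  also have "G g * M (S - {g}) = (-1) ^ cnt S g * M S"
  proof -
    have "cnt (S - {g}) g = cnt S g" using cnt_remove[OF fS g, of g] by simp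
    moreover have "insert g (S - {g}) = S" using g by auto
    ultimately show ?thesis using fS by (simp add: G_M)
  qed
  finally have "G g * D (M S) = ((-1) ^ cnt S g * (-1) ^ cnt S g) * (DG g * M S)"
    by (simp add: pull_sign mult.assoc)
  also have "(-1) ^ cnt S g * (-1) ^ cnt S g = (1::alg)" by (simp flip: power_add)
  finally show ?thesis using fS g by (simp add: G_M D_zero)
qed

lemma D_G_M: "finite S \<Longrightarrow> D (G g * M S) = DG g * M S - G g * D (M S)"
  using D_G_M_in D_G_M_notin by blast

lemma D_G: "D (G g * x) = DG g * x - G g * D x"
proof -
  let ?A = "{S. rep x S \<noteq> 0}"
  have fin: "\<And>S. S \<in> ?A \<Longrightarrow> finite S" using rep_fs[of x] by (auto simp: fs_def)
  have x: "x = (\<Sum>S\<in>?A. sc (rep x S) (M S))" by (rule decomp)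
  have "D (G g * x) = (\<Sum>S\<in>?A. sc (rep x S) (D (G g * M S)))"
    by (subst x) (simp add: sum_distrib_left D_sum D_sc flip: sc_mult_right)
  also have "\<dots> = (\<Sum>S\<in>?A. sc (rep x S) (DG g * M S) - sc (rep x S) (G g * D (M S)))"
    by (rule sum.cong) (auto simp: D_G_M fin sc_diff)
  also have "\<dots> = DG g * x - G g * D x"
    by (subst (1 3) x) (simp add: sum_distrib_left D_sum D_sc sum_subtractf flip: sc_mult_right)
  finally show ?thesis .
qed



definition ins :: "nat \<Rightarrow> alg \<Rightarrow> bool" where
  "ins n x \<longleftrightarrow> (\<forall>S. rep x S \<noteq> 0 \<longrightarrow> S \<subseteq> gens n)"

lemma finsupp_ins: "finsupp n (rep x) \<longleftrightarrow> ins n x"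
  using rep_fs[of x] by (auto simp: finsupp_def ins_def fs_def)

lemma ins_zero: "ins n 0" by (simp add: ins_def rep_simps ezero_def)
lemma ins_one: "ins n 1" by (simp add: ins_def rep_simps eone_def)
lemma ins_add: "ins n x \<Longrightarrow> ins n y \<Longrightarrow> ins n (x + y)"
  unfolding ins_def rep_simps eadd_def by (metis add.right_neutral add_0)
lemma ins_neg: "ins n x \<Longrightarrow> ins n (- x)"
  unfolding ins_def rep_simps by simp
lemma ins_diff: "ins n x \<Longrightarrow> ins n y \<Longrightarrow> ins n (x - y)"
  using ins_add[OF _ ins_neg] by (metis diff_conv_add_uminus)
lemma ins_mult: "ins n x \<Longrightarrow> ins n y \<Longrightarrow> ins n (x * y)"
proof -
  assume x: "ins n x" and y: "ins n y"
  show ?thesis unfolding ins_def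
  proof (intro allI impI)
    fix U assume "rep (x * y) U \<noteq> 0"
    hence "emult (rep x) (rep y) U \<noteq> 0" by (simp add: rep_simps)
    then obtain S where "S \<subseteq> U" "rep x S \<noteq> 0" "rep y (U - S) \<noteq> 0" using emult_nz by blast
    moreover have "U = S \<union> (U - S)" using \<open>S \<subseteq> U\<close> by blast
    ultimately show "U \<subseteq> gens n" using x y unfolding ins_def by blast
  qed
qed
lemma ins_pow: "ins n x \<Longrightarrow> ins n (x ^ k)"
  by (induction k) (auto simp: ins_one ins_mult)
lemma ins_sign: "ins n ((-1) ^ k)"
  by (rule ins_pow, rule ins_neg, rule ins_one)
lemma ins_prod_list: "(\<And>z. z \<in> set zs \<Longrightarrow> ins n z) \<Longrightarrow> ins n (prod_list zs)"
  by (induction zs) (auto simp: ins_one ins_mult)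
lemma ins_G: "g \<in> gens n \<Longrightarrow> ins n (G g)"
  by (auto simp: ins_def G_def rep_M mon_def)

definition Iset :: "nat \<Rightarrow> alg set" where "Iset n = {x. rep x \<in> rel_ideal n}"

lemma rel_ideal_neg: "p \<in> rel_ideal n \<Longrightarrow> (\<lambda>S. - p S) \<in> rel_ideal n"
proof (induction rule: rel_ideal.induct)
  case zero
  have "(\<lambda>S. - ezero S) = ezero" by (simp add: ezero_def)
  thus ?case using rel_ideal.zero by simp
next
  case (gen a r)
  have "(\<lambda>S. - emult a r S) = emult (\<lambda>S. - a S) r"
    by (auto simp: emult_def sum_negf fun_eq_iff)
  moreover have "finsupp n (\<lambda>S. - a S)" using gen(1) by (simp add: finsupp_def)
  ultimately show ?case using rel_ideal.gen gen(2) by simp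
next
  case (add p q)
  have "(\<lambda>S. - eadd p q S) = eadd (\<lambda>S. - p S) (\<lambda>S. - q S)" by (simp add: eadd_def fun_eq_iff)
  thus ?case using rel_ideal.add add by simp
qed

lemma finsupp_fs: "finsupp n f \<Longrightarrow> fs f"
proof -
  assume "finsupp n f"
  moreover have "finite (gens n)"
  proof -
    have "gens n \<subseteq> X ` {1..n} \<union> Y ` {1..n} \<union> (\<lambda>(i, j). W i j) ` ({1..n} \<times> {1..n})"
      by (auto simp: gens_def)
    thus ?thesis by (rule finite_subset) auto
  qed
  ultimately show ?thesis unfolding finsupp_def fs_def by (auto intro: finite_subset)
qed

lemma rel_ideal_left: "p \<in> rel_ideal n \<Longrightarrow> finsupp n b \<Longrightarrow> emult b p \<in> rel_ideal n"
proof (induction rule: rel_ideal.induct)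
  case zero thus ?case by (simp add: emult_ezero_right rel_ideal.zero)
next
  case (gen a r)
  have "emult b (emult a r) = emult (emult b a) r" by (simp add: emult_assoc_pt fun_eq_iff)
  moreover have "finsupp n (emult b a)"
  proof -
    have "ins n (abs b * abs a)"
      using gen by (intro ins_mult) (simp_all add: finsupp_ins[symmetric] rep_abs finsupp_fs)
    thus ?thesis using gen by (simp add: finsupp_ins[symmetric] rep_simps rep_abs finsupp_fs)
  qed
  ultimately show ?case using rel_ideal.gen gen(2) by simp
next
  case (add p q)
  thus ?case by (simp add: emult_eadd_right rel_ideal.add)
qed

lemma I_zero: "0 \<in> Iset n" by (simp add: Iset_def rep_simps rel_ideal.zero)
lemma I_add: "x \<in> Iset n \<Longrightarrow> y \<in> Iset n \<Longrightarrow> x + y \<in> Iset n"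
  by (simp add: Iset_def rep_simps rel_ideal.add)
lemma I_neg: "x \<in> Iset n \<Longrightarrow> - x \<in> Iset n"
  by (simp add: Iset_def rep_simps rel_ideal_neg)
lemma I_diff: "x \<in> Iset n \<Longrightarrow> y \<in> Iset n \<Longrightarrow> x - y \<in> Iset n"
  using I_add[OF _ I_neg] by (metis diff_conv_add_uminus)
lemma I_left: "x \<in> Iset n \<Longrightarrow> ins n y \<Longrightarrow> y * x \<in> Iset n"
  by (simp add: Iset_def rep_simps rel_ideal_left finsupp_ins)
lemma I_sum: "(\<And>a. a \<in> A \<Longrightarrow> F a \<in> Iset n) \<Longrightarrow> sum F A \<in> Iset n"
  by (induction A rule: infinite_finite_induct) (auto simp: I_zero I_add)
lemma I_gen: "rep r \<in> rels n \<Longrightarrow> ins n a \<Longrightarrow> a * r \<in> Iset n"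
  by (simp add: Iset_def rep_simps rel_ideal.gen finsupp_ins)

lemma I_rel_mult:
  assumes "rep (p * q) \<in> rels n" "p \<in> lin1" "q \<in> lin1" "ins n y" "set zs \<subseteq> lin1" "ins n (prod_list zs)"
  shows "y * (p * q) * prod_list zs \<in> Iset n"
proof -
  have "y * (p * q) * prod_list zs = (y * prod_list zs) * (p * q)"
    using even_comm_prod[OF assms(2,3,5)] by (simp add: mult.assoc)
  thus ?thesis using I_gen[OF assms(1)] ins_mult[OF assms(4,6)] by simp
qed



lemma sign_pull: "z * ((-1) ^ k * y) = (-1) ^ k * (z * (y::alg))"
  by (metis mult.assoc neg1_pow_comm)

definition Om :: "(nat \<Rightarrow> alg) \<Rightarrow> nat set \<Rightarrow> alg" where
  "Om w T = prod_list (map w (sorted_list_of_set T))"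

definition pos :: "nat set \<Rightarrow> nat \<Rightarrow> nat" where
  "pos T m = card {l \<in> T. l < m}"

lemma Om_empty: "Om w {} = 1" by (simp add: Om_def)

lemma Om_Min: "finite T \<Longrightarrow> T \<noteq> {} \<Longrightarrow> Om w T = w (Min T) * Om w (T - {Min T})"
  by (simp add: Om_def sorted_list_of_set_nonempty)

lemma pos_Min: "finite T \<Longrightarrow> pos T (Min T) = 0"
proof -
  assume f: "finite T"
  have "{l \<in> T. l < Min T} = {}" using Min_le[OF f] by force
  thus ?thesis by (simp add: pos_def)
qed

lemma pos_remove_Min:
  assumes "finite T" "m \<in> T" "m \<noteq> Min T"
  shows "pos T m = Suc (pos (T - {Min T}) m)"
proof -
  have T: "T \<noteq> {}" using assms by auto
  have "Min T \<le> m" using Min_le[OF assms(1,2)] .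
  hence mi: "Min T \<in> T" "Min T < m" using assms(3) Min_in[OF assms(1) T] by auto
  have "{l \<in> T. l < m} = insert (Min T) {l \<in> T - {Min T}. l < m}" using mi by auto
  thus ?thesis using assms(1) by (simp add: pos_def)
qed

lemma Min_remove_other:
  assumes "finite T" "m \<in> T" "m \<noteq> Min T"
  shows "Min (T - {m}) = Min T"
proof -
  have T: "T \<noteq> {}" using assms by auto
  have "Min T \<in> T - {m}" using Min_in[OF assms(1) T] assms(3) by auto
  moreover have "\<forall>x \<in> T - {m}. Min T \<le> x" using assms(1) by auto
  ultimately show ?thesis using assms(1) by (intro Min_eqI) auto
qed

lemma Om_pull:
  assumes "finite T" "m \<in> T" "\<And>l. w l \<in> lin1"
  shows "Om w T = (-1) ^ pos T m * (w m * Om w (T - {m}))"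
  using assms(1,2)
proof (induction "card T" arbitrary: T rule: less_induct)
  case less
  have T: "T \<noteq> {}" using less by auto
  show ?case
  proof (cases "m = Min T")
    case True
    thus ?thesis using less T by (simp add: Om_Min pos_Min)
  next
    case False
    let ?mu = "Min T"
    let ?T' = "T - {?mu}"
    have mu: "?mu \<in> T" using Min_in[OF less(2) T] .
    have mT': "m \<in> ?T'" using less(3) False by auto
    have cT': "card ?T' < card T" using less(2) mu by (simp add: card_gt_0_iff T)
    have IH: "Om w ?T' = (-1) ^ pos ?T' m * (w m * Om w (?T' - {m}))"
      using less(1)[OF cT' _ mT'] less(2) by simp
    have e1: "?T' - {m} = (T - {m}) - {Min (T - {m})}"
      using Min_remove_other[OF less(2,3) False] by auto
    have ne: "T - {m} \<noteq> {}" using mu False by auto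
    have e2: "w ?mu * Om w (?T' - {m}) = Om w (T - {m})"
      using Om_Min[of "T - {m}" w] less(2) ne e1 Min_remove_other[OF less(2,3) False] by simp
    have "Om w T = w ?mu * Om w ?T'" using Om_Min[OF less(2) T] .
    also have "\<dots> = (-1) ^ pos ?T' m * (w ?mu * (w m * Om w (?T' - {m})))"
      unfolding IH by (rule sign_pull)
    also have "w ?mu * (w m * Om w (?T' - {m})) = - (w m * (w ?mu * Om w (?T' - {m})))"
      using lin1_anti[OF assms(3) assms(3), of m ?mu] by (simp add: mult.assoc[symmetric])
    also have "(-1) ^ pos ?T' m * (- (w m * (w ?mu * Om w (?T' - {m})))) = (-1) ^ pos T m * (w m * Om w (T - {m}))"
      using pos_remove_Min[OF less(2,3) False] e2 by simp
    finally show ?thesis .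
  qed
qed

lemma D_one: "D 1 = 0"
  using D_M[of "{}"] by (simp add: M_empty)

lemma Om_D:
  assumes "finite T"
    and Dw: "\<And>l x. D (w l * x) = d l * x - w l * D x"
    and com: "\<And>l l'. w l' * d l = d l * w l'"
  shows "D (Om w T) = (\<Sum>m\<in>T. (-1) ^ pos T m * (d m * Om w (T - {m})))"
  using assms(1)
proof (induction "card T" arbitrary: T rule: less_induct)
  case less
  show ?case
  proof (cases "T = {}")
    case True thus ?thesis by (simp add: Om_empty D_one)
  next
    case T: False
    let ?mu = "Min T"
    let ?T' = "T - {?mu}"
    have mu: "?mu \<in> T" using Min_in[OF less(2) T] .
    have cT': "card ?T' < card T" using less(2) mu by (simp add: card_gt_0_iff T)
    have IH: "D (Om w ?T') = (\<Sum>m\<in>?T'. (-1) ^ pos ?T' m * (d m * Om w (?T' - {m})))"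
      using less(1)[OF cT'] less(2) by simp
    have "D (Om w T) = d ?mu * Om w ?T' - w ?mu * D (Om w ?T')"
      using Om_Min[OF less(2) T] Dw by simp
    also have "w ?mu * D (Om w ?T') = (\<Sum>m\<in>?T'. (-1) ^ pos ?T' m * (d m * (w ?mu * Om w (?T' - {m}))))"
      unfolding IH sum_distrib_left
    proof (rule sum.cong[OF refl])
      fix m
      have "w ?mu * (d m * Om w (?T' - {m})) = d m * (w ?mu * Om w (?T' - {m}))"
        by (metis mult.assoc com)
      thus "w ?mu * ((-1) ^ pos ?T' m * (d m * Om w (?T' - {m}))) = (-1) ^ pos ?T' m * (d m * (w ?mu * Om w (?T' - {m})))"
        by (simp only: sign_pull)
    qed
    also have "\<dots> = (\<Sum>m\<in>?T'. - ((-1) ^ pos T m * (d m * Om w (T - {m}))))"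
    proof (rule sum.cong[OF refl])
      fix m assume m: "m \<in> ?T'"
      hence mT: "m \<in> T" and mne: "m \<noteq> ?mu" by auto
      have e1: "?T' - {m} = (T - {m}) - {Min (T - {m})}"
        using Min_remove_other[OF less(2) mT mne] by auto
      have ne: "T - {m} \<noteq> {}" using mu mne by auto
      have e2: "w ?mu * Om w (?T' - {m}) = Om w (T - {m})"
        using Om_Min[of "T - {m}" w] less(2) ne e1 Min_remove_other[OF less(2) mT mne] by simp
      show "(-1) ^ pos ?T' m * (d m * (w ?mu * Om w (?T' - {m}))) = - ((-1) ^ pos T m * (d m * Om w (T - {m})))"
        using pos_remove_Min[OF less(2) mT mne] e2 by simp
    qed
    also have "d ?mu * Om w ?T' - (\<Sum>m\<in>?T'. - ((-1) ^ pos T m * (d m * Om w (T - {m})))) =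
        (\<Sum>m\<in>T. (-1) ^ pos T m * (d m * Om w (T - {m})))"
      using less(2) mu by (simp add: sum.remove[of T ?mu] pos_Min sum_negf)
    finally show ?thesis .
  qed
qed



lemma ext_identities:
  fixes ap aq ar bp bq br :: alg
  assumes l: "ap \<in> lin1" "aq \<in> lin1" "ar \<in> lin1" "bp \<in> lin1" "bq \<in> lin1" "br \<in> lin1"
  shows "ap * (ar * br) - ap * (aq * bq) + aq * (ap * bp) = - (ap * (br * (ap + aq + ar))) - ap * (aq * (bp + bq + br))"
    and "bp * (ar * br) - bp * (aq * bq) + bq * (ap * bp) = - (bp * (br * (ap + aq + ar))) - bp * ((ap + aq) * (bp + bq + br))"
proof -
  have sq0: "ap * ap = 0" "\<And>Z. ap * (ap * Z) = 0" using lin1_sq[OF l(1)] by (simp_all add: mult.assoc[symmetric])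
  have sq1: "aq * aq = 0" "\<And>Z. aq * (aq * Z) = 0" using lin1_sq[OF l(2)] by (simp_all add: mult.assoc[symmetric])
  have sq2: "ar * ar = 0" "\<And>Z. ar * (ar * Z) = 0" using lin1_sq[OF l(3)] by (simp_all add: mult.assoc[symmetric])
  have sq3: "bp * bp = 0" "\<And>Z. bp * (bp * Z) = 0" using lin1_sq[OF l(4)] by (simp_all add: mult.assoc[symmetric])
  have sq4: "bq * bq = 0" "\<And>Z. bq * (bq * Z) = 0" using lin1_sq[OF l(5)] by (simp_all add: mult.assoc[symmetric])
  have sq5: "br * br = 0" "\<And>Z. br * (br * Z) = 0" using lin1_sq[OF l(6)] by (simp_all add: mult.assoc[symmetric])
  have sw10: "aq * ap = - (ap * aq)" "\<And>Z. aq * (ap * Z) = - (ap * (aq * Z))" using lin1_anti[OF l(1) l(2)] by (simp_all add: mult.assoc[symmetric])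
  have sw20: "ar * ap = - (ap * ar)" "\<And>Z. ar * (ap * Z) = - (ap * (ar * Z))" using lin1_anti[OF l(1) l(3)] by (simp_all add: mult.assoc[symmetric])
  have sw21: "ar * aq = - (aq * ar)" "\<And>Z. ar * (aq * Z) = - (aq * (ar * Z))" using lin1_anti[OF l(2) l(3)] by (simp_all add: mult.assoc[symmetric])
  have sw30: "bp * ap = - (ap * bp)" "\<And>Z. bp * (ap * Z) = - (ap * (bp * Z))" using lin1_anti[OF l(1) l(4)] by (simp_all add: mult.assoc[symmetric])
  have sw31: "bp * aq = - (aq * bp)" "\<And>Z. bp * (aq * Z) = - (aq * (bp * Z))" using lin1_anti[OF l(2) l(4)] by (simp_all add: mult.assoc[symmetric])
  have sw32: "bp * ar = - (ar * bp)" "\<And>Z. bp * (ar * Z) = - (ar * (bp * Z))" using lin1_anti[OF l(3) l(4)] by (simp_all add: mult.assoc[symmetric])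
  have sw40: "bq * ap = - (ap * bq)" "\<And>Z. bq * (ap * Z) = - (ap * (bq * Z))" using lin1_anti[OF l(1) l(5)] by (simp_all add: mult.assoc[symmetric])
  have sw41: "bq * aq = - (aq * bq)" "\<And>Z. bq * (aq * Z) = - (aq * (bq * Z))" using lin1_anti[OF l(2) l(5)] by (simp_all add: mult.assoc[symmetric])
  have sw42: "bq * ar = - (ar * bq)" "\<And>Z. bq * (ar * Z) = - (ar * (bq * Z))" using lin1_anti[OF l(3) l(5)] by (simp_all add: mult.assoc[symmetric])
  have sw43: "bq * bp = - (bp * bq)" "\<And>Z. bq * (bp * Z) = - (bp * (bq * Z))" using lin1_anti[OF l(4) l(5)] by (simp_all add: mult.assoc[symmetric])
  have sw50: "br * ap = - (ap * br)" "\<And>Z. br * (ap * Z) = - (ap * (br * Z))" using lin1_anti[OF l(1) l(6)] by (simp_all add: mult.assoc[symmetric])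
  have sw51: "br * aq = - (aq * br)" "\<And>Z. br * (aq * Z) = - (aq * (br * Z))" using lin1_anti[OF l(2) l(6)] by (simp_all add: mult.assoc[symmetric])
  have sw52: "br * ar = - (ar * br)" "\<And>Z. br * (ar * Z) = - (ar * (br * Z))" using lin1_anti[OF l(3) l(6)] by (simp_all add: mult.assoc[symmetric])
  have sw53: "br * bp = - (bp * br)" "\<And>Z. br * (bp * Z) = - (bp * (br * Z))" using lin1_anti[OF l(4) l(6)] by (simp_all add: mult.assoc[symmetric])
  have sw54: "br * bq = - (bq * br)" "\<And>Z. br * (bq * Z) = - (bq * (br * Z))" using lin1_anti[OF l(5) l(6)] by (simp_all add: mult.assoc[symmetric])
  show "ap * (ar * br) - ap * (aq * bq) + aq * (ap * bp) = - (ap * (br * (ap + aq + ar))) - ap * (aq * (bp + bq + br))"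
    by (simp add: algebra_simps sq0 sq1 sq2 sq3 sq4 sq5 sw10 sw20 sw21 sw30 sw31 sw32 sw40 sw41 sw42 sw43 sw50 sw51 sw52 sw53 sw54)
  show "bp * (ar * br) - bp * (aq * bq) + bq * (ap * bp) = - (bp * (br * (ap + aq + ar))) - bp * ((ap + aq) * (bp + bq + br))"
    by (simp add: algebra_simps sq0 sq1 sq2 sq3 sq4 sq5 sw10 sw20 sw21 sw30 sw31 sw32 sw40 sw41 sw42 sw43 sw50 sw51 sw52 sw53 sw54)
qed

lemma fiber:
  fixes n k p q r :: nat and w d v a b :: "nat \<Rightarrow> alg"
  assumes la: "\<And>l. a l \<in> lin1" and lb: "\<And>l. b l \<in> lin1"
    and dab: "\<And>l. d l = a l * b l"
    and H5a: "\<And>U l. U \<subseteq> {1..k} \<Longrightarrow> l \<in> U \<Longrightarrow> a l * Om w U \<in> Iset n"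
    and H5b: "\<And>U l. U \<subseteq> {1..k} \<Longrightarrow> l \<in> U \<Longrightarrow> b l * Om w U \<in> Iset n"
    and sa: "(\<Sum>l\<in>{1..k}. a l) = 0" and sb: "(\<Sum>l\<in>{1..k}. b l) = 0"
    and insa: "\<And>l. l \<in> {1..k} \<Longrightarrow> ins n (a l)" and insb: "\<And>l. l \<in> {1..k} \<Longrightarrow> ins n (b l)"
    and vv: "v = a \<or> v = b"
    and pqr: "p < q" "q < r" "p \<in> {1..k}" "q \<in> {1..k}" "r \<in> {1..k}"
  shows "v p * (d r * Om w ({1..k} - {p, q, r})) - v p * (d q * Om w ({1..k} - {p, q, r}))
          + v q * (d p * Om w ({1..k} - {p, q, r})) \<in> Iset n"
proof -
  let ?U = "{1..k} - {p, q, r}"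
  let ?O = "Om w ?U"
  have Kdec: "{1..k} = insert p (insert q (insert r ?U))" using pqr by auto
  have AU: "(a p + a q + a r) * ?O \<in> Iset n"
  proof -
    have "(\<Sum>l\<in>{1..k}. a l) = a p + (a q + (a r + (\<Sum>l\<in>?U. a l)))"
      using pqr by (subst Kdec) (simp add: sum.insert)
    hence "a p + a q + a r = - (\<Sum>l\<in>?U. a l)" using sa by (simp add: add.assoc eq_neg_iff_add_eq_0)
    hence "(a p + a q + a r) * ?O = - (\<Sum>l\<in>?U. a l * ?O)" by (simp add: sum_distrib_right)
    moreover have "(\<Sum>l\<in>?U. a l * ?O) \<in> Iset n" by (rule I_sum) (rule H5a; auto)
    ultimately show ?thesis using I_neg by simp
  qed
  have BU: "(b p + b q + b r) * ?O \<in> Iset n"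
  proof -
    have "(\<Sum>l\<in>{1..k}. b l) = b p + (b q + (b r + (\<Sum>l\<in>?U. b l)))"
      using pqr by (subst Kdec) (simp add: sum.insert)
    hence "b p + b q + b r = - (\<Sum>l\<in>?U. b l)" using sb by (simp add: add.assoc eq_neg_iff_add_eq_0)
    hence "(b p + b q + b r) * ?O = - (\<Sum>l\<in>?U. b l * ?O)" by (simp add: sum_distrib_right)
    moreover have "(\<Sum>l\<in>?U. b l * ?O) \<in> Iset n" by (rule I_sum) (rule H5b; auto)
    ultimately show ?thesis using I_neg by simp
  qed
  have ins: "ins n (a p)" "ins n (a q)" "ins n (b p)" "ins n (b r)" using insa insb pqr by auto
  have "v p * (d r * ?O) - v p * (d q * ?O) + v q * (d p * ?O)
      = (v p * (a r * b r) - v p * (a q * b q) + v q * (a p * b p)) * ?O"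
    by (simp add: dab algebra_simps)
  also have "\<dots> \<in> Iset n"
  proof (cases "v = a")
    case True
    have "(v p * (a r * b r) - v p * (a q * b q) + v q * (a p * b p)) * ?O
       = - (a p * (b r * ((a p + a q + a r) * ?O))) - a p * (a q * ((b p + b q + b r) * ?O))"
      unfolding True ext_identities(1)[OF la la la lb lb lb] by (simp add: algebra_simps)
    also have "\<dots> \<in> Iset n"
      by (intro I_diff I_neg I_left[OF I_left[OF AU ins(4)] ins(1)] I_left[OF I_left[OF BU ins(2)] ins(1)])
    finally show ?thesis .
  next
    case False
    hence vb: "v = b" using vv by simp
    have "(v p * (a r * b r) - v p * (a q * b q) + v q * (a p * b p)) * ?O
       = - (b p * (b r * ((a p + a q + a r) * ?O))) - b p * ((a p + a q) * ((b p + b q + b r) * ?O))"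
      unfolding vb ext_identities(2)[OF la la la lb lb lb] by (simp add: algebra_simps)
    also have "\<dots> \<in> Iset n"
      by (intro I_diff I_neg I_left[OF I_left[OF AU ins(4)] ins(3)] I_left[OF I_left[OF BU ins_add[OF ins(1,2)]] ins(3)])
    finally show ?thesis .
  qed
  finally show ?thesis .
qed



lemma card3_obtain:
  assumes "finite Z" "card Z = 3"
  obtains p q r :: nat where "p < q" "q < r" "Z = {p, q, r}"
proof -
  let ?xs = "sorted_list_of_set Z"
  have len: "length ?xs = 3" using assms by simp
  have l3: "\<exists>p q r. xs = [p, q, r]" if "length xs = 3" for xs :: "nat list"
    using that by (auto simp: numeral_3_eq_3 length_Suc_conv)
  have "\<exists>p q r. ?xs = [p, q, r]" by (rule l3[OF len])
  then obtain p q r where xs: "?xs = [p, q, r]" by blast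
  have "sorted_wrt (<) ?xs" by (rule strict_sorted_list_of_set)
  hence "p < q" "q < r" using xs by auto
  moreover have "set ?xs = Z" using assms(1) by simp
  hence "Z = {p, q, r}" using xs by simp
  ultimately show ?thesis using that by blast
qed

lemma sorted3_eq:
  fixes a b c p q r :: nat
  assumes "a < b" "b < c" "p < q" "q < r" "{a, b, c} = {p, q, r}"
  shows "a = p \<and> b = q \<and> c = r"
proof -
  have "Min {a, b, c} = a" using assms(1,2) by (simp add: min_def)
  moreover have "Min {p, q, r} = p" using assms(3,4) by (simp add: min_def)
  moreover have "Max {a, b, c} = c" using assms(1,2) by (simp add: max_def)
  moreover have "Max {p, q, r} = r" using assms(3,4) by (simp add: max_def)
  ultimately have ap: "a = p" and cr: "c = r" using assms(5) by metis+
  have "b \<in> {p, q, r}" using assms(5) by blast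
  thus ?thesis using ap cr assms by auto
qed

lemma pos_K:
  assumes "m \<in> {1..k}" "Q \<subseteq> {1..k}"
  shows "pos ({1..k} - Q) m = (m - 1) - card (Q \<inter> {..<m})"
proof -
  have "{l \<in> {1..k} - Q. l < m} = {1..<m} - (Q \<inter> {..<m})" using assms by auto
  moreover have "Q \<inter> {..<m} \<subseteq> {1..<m}" using assms by auto
  ultimately show ?thesis unfolding pos_def by (simp add: card_Diff_subset finite_subset)
qed

lemma core:
  fixes n k :: nat and w d v a b :: "nat \<Rightarrow> alg"
  assumes la: "\<And>l. a l \<in> lin1" and lb: "\<And>l. b l \<in> lin1"
    and dab: "\<And>l. d l = a l * b l"
    and Dw: "\<And>l x. D (w l * x) = d l * x - w l * D x"
    and com: "\<And>l l'. w l' * d l = d l * w l'"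
    and Dv: "\<And>i x. D (v i * x) = - (v i * D x)"
    and H5a: "\<And>U l. U \<subseteq> {1..k} \<Longrightarrow> l \<in> U \<Longrightarrow> a l * Om w U \<in> Iset n"
    and H5b: "\<And>U l. U \<subseteq> {1..k} \<Longrightarrow> l \<in> U \<Longrightarrow> b l * Om w U \<in> Iset n"
    and sa: "(\<Sum>l\<in>{1..k}. a l) = 0" and sb: "(\<Sum>l\<in>{1..k}. b l) = 0"
    and insa: "\<And>l. l \<in> {1..k} \<Longrightarrow> ins n (a l)" and insb: "\<And>l. l \<in> {1..k} \<Longrightarrow> ins n (b l)"
    and vv: "v = a \<or> v = b"
  shows "D (\<Sum>(i, j)\<in>{(i, j). 1 \<le> i \<and> i < j \<and> j \<le> k}. (-1) ^ (i + j) * (v i * Om w ({1..k} - {i, j}))) \<in> Iset n"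
proof -
  define K where "K = {1..k}"
  define P where "P = {(i, j). 1 \<le> i \<and> i < j \<and> (j::nat) \<le> k}"
  define h where "h = (\<lambda>((i::nat, j::nat), m::nat). - ((-1) ^ (i + j + pos (K - {i, j}) m) * (v i * (d m * Om w (K - {i, j} - {m})))))"
  define B where "B = (\<lambda>(i::nat, j::nat). K - {i, j})"
  have finP: "finite P"
    by (rule finite_subset[of _ "{1..k} \<times> {1..k}"]) (auto simp: P_def)
  have finK: "finite K" by (simp add: K_def)
  have step1: "D (\<Sum>(i, j)\<in>P. (-1) ^ (i + j) * (v i * Om w (K - {i, j}))) = (\<Sum>x\<in>P. \<Sum>m\<in>B x. h (x, m))"
    unfolding D_sum
  proof (rule sum.cong[OF refl])
    fix x assume "x \<in> P"
    obtain i j where x: "x = (i, j)" by (cases x)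
    have fB: "finite (K - {i, j})" using finK by simp
    have "D ((-1) ^ (i + j) * (v i * Om w (K - {i, j}))) = (-1) ^ (i + j) * - (v i * D (Om w (K - {i, j})))"
      by (simp add: D_neg1_pow Dv)
    also have "v i * D (Om w (K - {i, j})) = (\<Sum>m\<in>K - {i, j}. (-1) ^ pos (K - {i, j}) m * (v i * (d m * Om w (K - {i, j} - {m}))))"
      unfolding Om_D[OF fB Dw com] sum_distrib_left by (rule sum.cong[OF refl], rule sign_pull)
    also have "(-1) ^ (i + j) * - (\<Sum>m\<in>K - {i, j}. (-1) ^ pos (K - {i, j}) m * (v i * (d m * Om w (K - {i, j} - {m}))))
        = (\<Sum>m\<in>K - {i, j}. h ((i, j), m))"
      by (simp add: h_def sum_distrib_left power_add mult.assoc sum_negf)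
    finally show "D (case x of (i, j) \<Rightarrow> (-1) ^ (i + j) * (v i * Om w (K - {i, j}))) = (\<Sum>m\<in>B x. h (x, m))"
      by (simp add: x B_def)
  qed
  define S where "S = Sigma P B"
  have finS: "finite S" unfolding S_def using finP finK by (auto simp: B_def)
  have step2: "(\<Sum>x\<in>P. \<Sum>m\<in>B x. h (x, m)) = (\<Sum>y\<in>S. h y)"
    unfolding S_def using finP finK by (subst sum.Sigma) (auto simp: B_def)
  define g where "g = (\<lambda>((i::nat, j::nat), m::nat). {i, j, m})"
  define T3 where "T3 = {Z. Z \<subseteq> K \<and> card Z = 3}"
  have finT3: "finite T3" unfolding T3_def using finK by (auto intro: finite_subset[of _ "Pow K"])
  have gS: "g ` S \<subseteq> T3"
  proof
    fix Z assume "Z \<in> g ` S"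
    then obtain i j m where "((i, j), m) \<in> S" "Z = {i, j, m}" by (auto simp: g_def)
    thus "Z \<in> T3" by (auto simp: S_def P_def B_def T3_def K_def card_insert_if)
  qed
  have step3: "(\<Sum>y\<in>S. h y) = (\<Sum>Z\<in>T3. \<Sum>y\<in>{x \<in> S. g x = Z}. h y)"
    by (rule sum.group[OF finS finT3 gS, symmetric])
  have fib: "(\<Sum>y\<in>{x \<in> S. g x = Z}. h y) \<in> Iset n" if Z: "Z \<in> T3" for Z
  proof -
    have fZ: "finite Z" "card Z = 3" using Z finK by (auto simp: T3_def intro: finite_subset)
    obtain p q r where pqr: "p < q" "q < r" "Z = {p, q, r}" using card3_obtain[OF fZ] by blast
    have inK: "p \<in> K" "q \<in> K" "r \<in> K" using Z pqr by (auto simp: T3_def)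
    have fibset: "{x \<in> S. g x = Z} = {((p, q), r), ((p, r), q), ((q, r), p)}"
    proof
      show "{((p, q), r), ((p, r), q), ((q, r), p)} \<subseteq> {x \<in> S. g x = Z}"
        using inK pqr by (auto simp: S_def P_def B_def g_def K_def)
      show "{x \<in> S. g x = Z} \<subseteq> {((p, q), r), ((p, r), q), ((q, r), p)}"
      proof
        fix x assume x: "x \<in> {x \<in> S. g x = Z}"
        obtain i j m where xe: "x = ((i, j), m)" by (metis prod.collapse)
        have ij: "i < j" "m \<noteq> i" "m \<noteq> j" and Zi: "{i, j, m} = {p, q, r}"
          using x pqr by (auto simp: xe S_def P_def B_def g_def)
        consider "m < i" | "i < m \<and> m < j" | "j < m" using ij by linarith
        thus "x \<in> {((p, q), r), ((p, r), q), ((q, r), p)}"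
        proof cases
          case 1
          have "{m, i, j} = {p, q, r}" using Zi by blast
          hence "m = p \<and> i = q \<and> j = r" using sorted3_eq[OF 1 ij(1) pqr(1,2)] by blast
          thus ?thesis by (simp add: xe)
        next
          case 2
          have "{i, m, j} = {p, q, r}" using Zi by blast
          hence "i = p \<and> m = q \<and> j = r" using sorted3_eq[of i m j p q r] 2 pqr by blast
          thus ?thesis by (simp add: xe)
        next
          case 3
          hence "i = p \<and> j = q \<and> m = r" using sorted3_eq[OF ij(1) 3 pqr(1,2)] Zi by blast
          thus ?thesis by (simp add: xe)
        qed
      qed
    qed
    let ?U = "K - {p, q, r}"
    have e1: "pos (K - {p, q}) r = r - 3"
      using pos_K[of r k "{p, q}"] inK pqr by (simp add: K_def)
    have e2: "pos (K - {p, r}) q = q - 2"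
    proof -
      have "{p, r} \<inter> {..<q} = {p}" using pqr by auto
      thus ?thesis using pos_K[of q k "{p, r}"] inK by (simp add: K_def)
    qed
    have e3: "pos (K - {q, r}) p = p - 1"
    proof -
      have "{q, r} \<inter> {..<p} = {}" using pqr by auto
      thus ?thesis using pos_K[of p k "{q, r}"] inK by (simp add: K_def)
    qed
    have pp: "p \<ge> 1" using inK by (simp add: K_def)
    let ?e = "p + q + (r - 3)"
    have x1: "p + q + pos (K - {p, q}) r = ?e" using e1 by simp
    have x2: "p + r + pos (K - {p, r}) q = Suc ?e" using e2 pqr pp by simp
    have x3: "q + r + pos (K - {q, r}) p = Suc (Suc ?e)" using e3 pqr pp by simp
    have u1: "K - {p, q} - {r} = ?U" and u2: "K - {p, r} - {q} = ?U" and u3: "K - {q, r} - {p} = ?U" by auto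
    have "(\<Sum>y\<in>{x \<in> S. g x = Z}. h y) = h ((p, q), r) + h ((p, r), q) + h ((q, r), p)"
      unfolding fibset using pqr by simp
    also have "h ((p, q), r) = - ((-1) ^ ?e * (v p * (d r * Om w ?U)))"
      by (simp only: h_def prod.case x1 u1)
    also have "h ((p, r), q) = (-1) ^ ?e * (v p * (d q * Om w ?U))"
      by (simp only: h_def prod.case x2 u2) simp
    also have "h ((q, r), p) = - ((-1) ^ ?e * (v q * (d p * Om w ?U)))"
      by (simp only: h_def prod.case x3 u3) simp
    also have "- ((-1) ^ ?e * (v p * (d r * Om w ?U))) + (-1) ^ ?e * (v p * (d q * Om w ?U)) + - ((-1) ^ ?e * (v q * (d p * Om w ?U)))
       = - ((-1) ^ ?e * (v p * (d r * Om w ?U) - v p * (d q * Om w ?U) + v q * (d p * Om w ?U)))"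
      by (simp add: algebra_simps)
    also have "\<dots> \<in> Iset n"
      using fiber[OF la lb dab H5a H5b sa sb insa insb vv pqr(1,2)] inK
      by (intro I_neg I_left ins_sign) (simp_all add: K_def)
    finally show ?thesis .
  qed
  have "D (\<Sum>(i, j)\<in>P. (-1) ^ (i + j) * (v i * Om w (K - {i, j}))) \<in> Iset n"
    unfolding step1 step2 step3 by (rule I_sum) (rule fib)
  thus ?thesis by (simp add: K_def P_def)
qed



lemma esum_cong: "(\<And>x. x \<in> A \<Longrightarrow> F x = H x) \<Longrightarrow> esum F A = esum H A"
  by (auto simp: esum_def fun_eq_iff intro!: sum.cong)

lemma rep_G: "rep (G g) = mon {g}" by (simp add: G_def rep_M)

lemma eprod_rep: "eprod (map (\<lambda>m. rep (f m)) xs) = rep (prod_list (map f xs))"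
  by (induction xs) (simp_all add: eprod_def rep_simps)

lemma filter_sorted: "filter (\<lambda>m. m \<noteq> i \<and> m \<noteq> j) [1..<k + 1] = sorted_list_of_set ({1..k} - {i, j})"
proof -
  let ?xs = "filter (\<lambda>m. m \<noteq> i \<and> m \<noteq> j) [1..<k + 1]"
  have "set ?xs = {1..k} - {i, j}" by auto
  moreover have "sorted ?xs" by (rule sorted_wrt_filter, rule sorted_upt)
  moreover have "distinct ?xs" by simp
  ultimately show ?thesis
    by (metis sorted_list_of_set_sort_remdups distinct_remdups_id sorted_sort_id)
qed

lemma D_lin_X: "D ((G (X p) - G (X q)) * x) = - ((G (X p) - G (X q)) * D x)"
  by (simp add: left_diff_distrib D_diff D_G DG_X)
lemma D_lin_Y: "D ((G (Y p) - G (Y q)) * x) = - ((G (Y p) - G (Y q)) * D x)"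
  by (simp add: left_diff_distrib D_diff D_G DG_Y)

lemma circuit_sum:
  fixes f :: "nat \<Rightarrow> alg"
  assumes c: "circuit n cs"
  shows "(\<Sum>l\<in>{1..length cs}. f (snd (cs ! (l - 1))) - f (fst (cs ! (l - 1)))) = 0"
proof -
  let ?k = "length cs"
  have k3: "?k \<ge> 3" using c by (simp add: circuit_def)
  define sc where "sc l = (if l = ?k then 1 else Suc l)" for l
  have tl: "snd (cs ! (l - 1)) = fst (cs ! (sc l - 1))" if "l \<in> {1..?k}" for l
  proof (cases "l = ?k")
    case True thus ?thesis using c by (simp add: circuit_def sc_def)
  next
    case False
    hence "(l - 1) + 1 < ?k" using that by auto
    hence "snd (cs ! (l - 1)) = fst (cs ! ((l - 1) + 1))" using c unfolding circuit_def by blast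
    thus ?thesis using False that by (simp add: sc_def)
  qed
  have bij: "bij_betw sc {1..?k} {1..?k}"
    by (rule bij_betw_byWitness[where f'="\<lambda>l. if l = 1 then ?k else l - 1"]) (use k3 in \<open>auto simp: sc_def\<close>)
  have "(\<Sum>l\<in>{1..?k}. f (snd (cs ! (l - 1)))) = (\<Sum>l\<in>{1..?k}. f (fst (cs ! (sc l - 1))))"
  proof (rule sum.cong[OF refl])
    fix l assume "l \<in> {1..?k}"
    thus "f (snd (cs ! (l - 1))) = f (fst (cs ! (sc l - 1)))" using tl[of l] by simp
  qed
  also have "\<dots> = (\<Sum>l\<in>{1..?k}. f (fst (cs ! (l - 1))))"
    using sum.reindex_bij_betw[OF bij, of "\<lambda>l. f (fst (cs ! (l - 1)))"] by simp
  finally show ?thesis by (simp add: sum_subtractf)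
qed

lemma wg_rep: "wg i j = rep (G (W (min i j) (max i j)))"
  by (simp add: wg_def rep_G)

lemma main_part:
  fixes VV :: "nat \<Rightarrow> gen"
  assumes c: "circuit n cs" and VV: "VV = X \<or> VV = Y"
  shows "d2 (L_C (\<lambda>i. mon {VV i}) cs) \<in> rel_ideal n"
proof -
  define k where "k = length cs"
  define K where "K = {1..k}"
  define s where "s l = fst (cs ! (l - 1))" for l
  define t where "t l = snd (cs ! (l - 1))" for l
  define w where "w l = G (W (min (s l) (t l)) (max (s l) (t l)))" for l
  define d where "d l = DG (W (min (s l) (t l)) (max (s l) (t l)))" for l
  define a where "a l = G (X (t l)) - G (X (s l))" for l
  define b where "b l = G (Y (t l)) - G (Y (s l))" for l
  define v where "v l = G (VV (t l)) - G (VV (s l))" for l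
  define P where "P = {(i, j). 1 \<le> i \<and> i < j \<and> j \<le> k}"
  have st: "s l \<in> {1..n}" "t l \<in> {1..n}" "s l \<noteq> t l" if "l \<in> K" for l
  proof -
    have "cs ! (l - 1) \<in> set cs" using that by (auto simp: K_def k_def)
    thus "s l \<in> {1..n}" "t l \<in> {1..n}" "s l \<noteq> t l" using c by (auto simp: circuit_def s_def t_def)
  qed
  have lw: "\<And>l. w l \<in> lin1" by (simp add: w_def lin1_G)
  have la: "\<And>l. a l \<in> lin1" by (simp add: a_def lin1_diff lin1_G)
  have lb: "\<And>l. b l \<in> lin1" by (simp add: b_def lin1_diff lin1_G)
  have dab: "\<And>l. d l = a l * b l"
  proof -
    fix l
    show "d l = a l * b l"
    proof (cases "s l \<le> t l")
      case True thus ?thesis by (simp add: d_def a_def b_def DG_W min_def max_def algebra_simps)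
    next
      case False thus ?thesis by (simp add: d_def a_def b_def DG_W min_def max_def algebra_simps)
    qed
  qed
  have Dw: "\<And>l x. D (w l * x) = d l * x - w l * D x" by (simp add: w_def d_def D_G)
  have com: "\<And>l l'. w l' * d l = d l * w l'" by (simp add: w_def d_def DG_comm)
  have Dv: "\<And>i x. D (v i * x) = - (v i * D x)"
    using VV by (auto simp: v_def D_lin_X D_lin_Y)
  have vv: "v = a \<or> v = b" using VV by (auto simp: v_def a_def b_def fun_eq_iff)
  have insW: "ins n (w l)" if "l \<in> K" for l
    using st[OF that] unfolding w_def by (intro ins_G) (auto simp: gens_def min_def max_def)
  have insa: "\<And>l. l \<in> K \<Longrightarrow> ins n (a l)"
    using st by (auto simp: a_def gens_def intro!: ins_diff ins_G)
  have insb: "\<And>l. l \<in> K \<Longrightarrow> ins n (b l)"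
    using st by (auto simp: b_def gens_def intro!: ins_diff ins_G)
  have H5: "c l * Om w U \<in> Iset n"
    if U: "U \<subseteq> K" "l \<in> U" and rel: "rep (c l * w l) \<in> rels n" and lc: "c l \<in> lin1" for U l and c :: "nat \<Rightarrow> alg"
  proof -
    have fU: "finite U" using U by (auto simp: K_def intro: finite_subset)
    let ?zs = "map w (sorted_list_of_set (U - {l}))"
    have "c l * Om w U = (-1) ^ pos U l * (c l * w l) * prod_list ?zs"
      unfolding Om_pull[OF fU U(2) lw] by (simp add: sign_pull Om_def mult.assoc)
    also have "\<dots> \<in> Iset n"
    proof (rule I_rel_mult[OF rel lc lw ins_sign])
      show "set ?zs \<subseteq> lin1" using lw by auto
      show "ins n (prod_list ?zs)"
        by (rule ins_prod_list) (use fU U insW in auto)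
    qed
    finally show ?thesis .
  qed
  have H5a: "\<And>U l. U \<subseteq> {1..k} \<Longrightarrow> l \<in> U \<Longrightarrow> a l * Om w U \<in> Iset n"
  proof -
    fix U l assume U: "U \<subseteq> {1..k}" "l \<in> U"
    hence lK: "l \<in> K" by (auto simp: K_def)
    have "rep (a l * w l) = emult (esub (xg (t l)) (xg (s l))) (wg (t l) (s l))"
      by (simp add: a_def w_def rep_simps rep_G xg_def wg_def min.commute max.commute)
    also have "\<dots> \<in> rels n" unfolding rels_def
    proof (rule UnI1, rule UnI1, rule CollectI, intro exI conjI)
      show "t l \<in> {1..n}" "s l \<in> {1..n}" "t l \<noteq> s l" using st[OF lK] by auto
    qed (rule refl)
    finally show "a l * Om w U \<in> Iset n" using H5[of U l a] U la by (auto simp: K_def)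
  qed
  have H5b: "\<And>U l. U \<subseteq> {1..k} \<Longrightarrow> l \<in> U \<Longrightarrow> b l * Om w U \<in> Iset n"
  proof -
    fix U l assume U: "U \<subseteq> {1..k}" "l \<in> U"
    hence lK: "l \<in> K" by (auto simp: K_def)
    have "rep (b l * w l) = emult (esub (yg (t l)) (yg (s l))) (wg (t l) (s l))"
      by (simp add: b_def w_def rep_simps rep_G yg_def wg_def min.commute max.commute)
    also have "\<dots> \<in> rels n" unfolding rels_def
    proof (rule UnI1, rule UnI2, rule CollectI, intro exI conjI)
      show "t l \<in> {1..n}" "s l \<in> {1..n}" "t l \<noteq> s l" using st[OF lK] by auto
    qed (rule refl)
    finally show "b l * Om w U \<in> Iset n" using H5[of U l b] U lb by (auto simp: K_def)
  qed
  have sa: "(\<Sum>l\<in>{1..k}. a l) = 0"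
    using circuit_sum[OF c, of "\<lambda>i. G (X i)"] by (simp add: a_def s_def t_def k_def)
  have sb: "(\<Sum>l\<in>{1..k}. b l) = 0"
    using circuit_sum[OF c, of "\<lambda>i. G (Y i)"] by (simp add: b_def s_def t_def k_def)
  have D_in: "D (\<Sum>(i, j)\<in>{(i, j). 1 \<le> i \<and> i < j \<and> j \<le> k}. (-1) ^ (i + j) * (v i * Om w ({1..k} - {i, j}))) \<in> Iset n"
    by (rule core[OF la lb dab Dw com Dv H5a H5b sa sb _ _ vv]) (use insa insb in \<open>auto simp: K_def\<close>)
  have om: "omega_minus cs i j = rep (Om w ({1..k} - {i, j}))" for i j
  proof -
    have "omega_minus cs i j = eprod (map (\<lambda>m. rep (w m)) (sorted_list_of_set ({1..k} - {i, j})))"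
      unfolding omega_minus_def filter_sorted[symmetric] k_def
      by (simp add: wg_rep w_def s_def t_def)
    thus ?thesis by (simp add: eprod_rep Om_def)
  qed
  have LC: "L_C (\<lambda>i. mon {VV i}) cs = rep (\<Sum>(i, j)\<in>{(i, j). 1 \<le> i \<and> i < j \<and> j \<le> k}. (-1) ^ (i + j) * (v i * Om w ({1..k} - {i, j})))"
    unfolding L_C_def rep_sum' k_def[symmetric]
  proof (rule esum_cong)
    fix x assume "x \<in> {(i, j). 1 \<le> i \<and> i < j \<and> j \<le> k}"
    obtain i j where x: "x = (i, j)" by (cases x)
    show "(case x of (i, j) \<Rightarrow> esc ((-1) ^ (i + j)) (emult (esub (mon {VV (snd (cs ! (i - 1)))}) (mon {VV (fst (cs ! (i - 1)))})) (omega_minus cs i j)))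
        = rep (case x of (i, j) \<Rightarrow> (-1) ^ (i + j) * (v i * Om w ({1..k} - {i, j})))"
      by (simp add: x rep_neg1_pow om) (simp add: rep_simps v_def rep_G s_def t_def)
  qed
  show ?thesis
    unfolding LC rep_D[symmetric] using D_in by (simp add: Iset_def)
qed


theorem theorem2p5:
  fixes n :: nat and cs :: "(nat \<times> nat) list"
  assumes "n \<ge> 3" and "circuit n cs"
  shows "d2 (L_C xg cs) \<in> rel_ideal n \<and> d2 (L_C yg cs) \<in> rel_ideal n"
proof -
  have x: "xg = (\<lambda>i. mon {X i})" by (simp add: xg_def fun_eq_iff)
  have y: "yg = (\<lambda>i. mon {Y i})" by (simp add: yg_def fun_eq_iff)
  show ?thesis using main_part[OF assms(2), of X] main_part[OF assms(2), of Y] x y by simp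
qed

end
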